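(* Let $\Omega$ be a bounded domain in $\mathbb{R}^n$, $p\geq 1$, let $f$ satisfy the standing assumptions with $k=(f')^{-1}$, and let $\nu=\sum_{i=1}^m a_i\delta_{x_i}\in\mathcal{P}(\Omega)$ be a purely atomic probability with finitely many atoms $x_1,\dots,x_m$. If $\mu=u\cdot\mathcal{L}^n$ minimizes $\mathfrak{F}^p_\nu$ over $\mathcal{P}(\Omega)$, then there exist constants $c_1,\dots,c_m\in\mathbb{R}$ such that $$u(x)=k\Big(\max\big\{c_1-|x-x_1|^p,\dots,c_m-|x-x_m|^p,0\big\}\Big)\quad\text{for a.e. }x\in\Omega.$$ In particular, up to a Lebesgue-null set, $\{u>0\}=\Omega\cap\bigcup_{i:\,c_i>0}B(x_i,c_i^{1/p})$.
   Context: A bounded domain is a bounded set $\Omega\subset\mathbb{R}^n$ which is the closure of a nonempty connected open set and whose boundary is Lebesgue-negligible. $\mathcal{P}(\Omega)$ is the set of Borel probability measures on $\Omega$. Standing assumptions on $f$: $f:[0,+\infty)\to[0,+\infty)$ is strictly convex and $C^1$, $f(0)=0$, $f'(0)=0$, and $\lim_{t\to+\infty}f(t)/t=+\infty$; $k=(f')^{-1}:[0,+\infty)\to[0,+\infty)$, continuous and strictly increasing with $k(0)=0$. $T_p(\mu,\nu)=\inf_\gamma\int|x-y|^p\,d\gamma$ over transport plans. $F(\mu)=\int_\Omega f(u)\,dx$ if $\mu=u\cdot\mathcal{L}^n$, $+\infty$ otherwise. $\mathfrak{F}^p_\nu(\mu)=T_p(\mu,\nu)+F(\mu)$. $B(x,r)$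 is the open ball of center $x$ and radius $r$. *)

theory Defs
  imports "HOL-Analysis.Analysis" "HOL-Probability.Probability"
begin

definition bounded_domain :: "'a::euclidean_space set \<Rightarrow> bool" where
  "bounded_domain \<Omega> \<longleftrightarrow> bounded \<Omega> \<and>
     (\<exists>U. open U \<and> connected U \<and> U \<noteq> {} \<and> \<Omega> = closure U) \<and>
     frontier \<Omega> \<in> null_sets lborel"

definition prob_on :: "'a::euclidean_space set \<Rightarrow> 'a measure set" where
  "prob_on \<Omega> = {M. prob_space M \<and> sets M = sets borel \<and> emeasure M (- \<Omega>) = 0}"

definition transport_plans :: "'a::euclidean_space measure \<Rightarrow> 'a measure \<Rightarrow> ('a \<times> 'a) measure set" where
  "transport_plans \<mu> \<nu> = {\<gamma>. prob_space \<gamma> \<and> sets \<gamma> = sets borel \<and>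
      distr \<gamma> borel fst = \<mu> \<and> distr \<gamma> borel snd = \<nu>}"

definition Tp :: "real \<Rightarrow> 'a::euclidean_space measure \<Rightarrow> 'a measure \<Rightarrow> ennreal" where
  "Tp p \<mu> \<nu> = (INF \<gamma>\<in>transport_plans \<mu> \<nu>. \<integral>\<^sup>+ z. ennreal (dist (fst z) (snd z) powr p) \<partial>\<gamma>)"

text \<open>F(mu) = integral of f(u) over \<Omega> if mu = u L^n, +infinity otherwise.
  All densities agree a.e., so the infimum over representatives is the value;
  the infimum over the empty set is +infinity.\<close>
definition Ffun :: "(real \<Rightarrow> real) \<Rightarrow> 'a::euclidean_space set \<Rightarrow> 'a measure \<Rightarrow> ennreal" where
  "Ffun f \<Omega> \<mu> = (INF u\<in>{u. u \<in> borel_measurable borel \<and> (\<forall>x. 0 \<le> u x) \<and>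
                         \<mu> = density lborel (\<lambda>x. ennreal (u x))}.
                   \<integral>\<^sup>+ x\<in>\<Omega>. ennreal (f (u x)) \<partial>lborel)"

definition frakF :: "real \<Rightarrow> (real \<Rightarrow> real) \<Rightarrow> 'a::euclidean_space set \<Rightarrow> 'a measure \<Rightarrow> 'a measure \<Rightarrow> ennreal" where
  "frakF p f \<Omega> \<nu> \<mu> = Tp p \<mu> \<nu> + Ffun f \<Omega> \<mu>"

definition strictly_convex_on :: "real set \<Rightarrow> (real \<Rightarrow> real) \<Rightarrow> bool" where
  "strictly_convex_on S f \<longleftrightarrow> (\<forall>x\<in>S. \<forall>y\<in>S. \<forall>t. x \<noteq> y \<and> 0 < t \<and> t < 1 \<longrightarrow>
      f ((1 - t) * x + t * y) < (1 - t) * f x + t * f y)"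

end

theory Submission
  imports Defs
begin

locale fk =
  fixes f f' k :: "real \<Rightarrow> real"
  assumes f_nonneg: "\<forall>t\<ge>0. f t \<ge> 0"
    and f_strict: "strictly_convex_on {0..} f"
    and f_deriv: "\<forall>t\<ge>0. (f has_real_derivative f' t) (at t within {0..})"
    and f0: "f 0 = 0" and f'0: "f' 0 = 0"
    and kk: "\<forall>s\<ge>0. k s \<ge> 0 \<and> f' (k s) = s"
begin

lemma f_convex: "convex_on {0..} f"
proof (rule convex_onI)
  fix t x y :: real
  assume t: "t > 0" "t < 1" and xy: "x \<in> {0..}" "y \<in> {0..}"
  show "f ((1 - t) *\<^sub>R x + t *\<^sub>R y) \<le> (1 - t) * f x + t * f y"
  proof (cases "x = y")
    case True
    then show ?thesis by (simp add: algebra_simps)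
  next
    case False
    then have "f ((1 - t) * x + t * y) < (1 - t) * f x + t * f y"
      using f_strict xy t unfolding strictly_convex_on_def by blast
    then show ?thesis by simp
  qed
qed (rule convex_real_interval)

lemma tangent:
  assumes t0: "t0 \<ge> 0" and t: "t \<ge> 0"
  shows "f t \<ge> f t0 + f' t0 * (t - t0)"
proof -
  have D: "((\<lambda>y. (f y - f t0) / (y - t0)) \<longlongrightarrow> f' t0) (at t0 within {0..})"
    using f_deriv t0 has_field_derivative_iff by blast
  consider "t = t0" | "t > t0" | "t < t0" by linarith
  then show ?thesis
  proof cases
    case 1 then show ?thesis by simp
  next
    case 2
    have D': "((\<lambda>y. (f y - f t0) / (y - t0)) \<longlongrightarrow> f' t0) (at_right t0)"
      by (rule tendsto_within_subset[OF D]) (use t0 in auto)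
    have ev0: "(f t - f t0) / (t - t0) \<ge> (f y - f t0) / (y - t0)" if y: "t0 < y" "y < t" for y
    proof -
      have "(f t0 - f y) / (t0 - y) \<le> (f t0 - f t) / (t0 - t)"
        using convex_on_slope_le(1)[OF f_convex, of t0 t y] y t0 t by auto
      moreover have "(f y - f t0) / (y - t0) = (f t0 - f y) / (t0 - y)"
        by (metis minus_diff_eq minus_divide_divide)
      moreover have "(f t - f t0) / (t - t0) = (f t0 - f t) / (t0 - t)"
        by (metis minus_diff_eq minus_divide_divide)
      ultimately show ?thesis by simp
    qed
    have ev: "eventually (\<lambda>y. (f t - f t0) / (t - t0) \<ge> (f y - f t0) / (y - t0)) (at_right t0)"
      unfolding eventually_at_right_field using ev0 2 by blast
    have "f' t0 \<le> (f t - f t0) / (t - t0)"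
      using tendsto_upperbound[OF D' ev] by simp
    then have "f' t0 * (t - t0) \<le> f t - f t0" using 2 by (simp add: pos_le_divide_eq)
    then show ?thesis by simp
  next
    case 3
    have eq: "at t0 within {..<t0} = at t0 within {0<..<t0}"
      by (rule at_within_nhd[of _ "{0<..}"]) (use 3 t in auto)
    have D': "((\<lambda>y. (f y - f t0) / (y - t0)) \<longlongrightarrow> f' t0) (at_left t0)"
      unfolding eq by (rule tendsto_within_subset[OF D]) auto
    have ev0: "(f t - f t0) / (t - t0) \<le> (f y - f t0) / (y - t0)" if y: "t < y" "y < t0" for y
      using convex_on_slope_le(2)[OF f_convex, of t t0 y] y t0 t by auto
    have ev: "eventually (\<lambda>y. (f t - f t0) / (t - t0) \<le> (f y - f t0) / (y - t0)) (at_left t0)"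
      unfolding eventually_at_left_field using ev0 3 by blast
    have "f' t0 \<ge> (f t - f t0) / (t - t0)"
      using tendsto_lowerbound[OF D' ev] by simp
    then have "f' t0 * (t - t0) \<le> f t - f t0" using 3 by (simp add: neg_divide_le_eq)
    then show ?thesis by simp
  qed
qed

end

context fk begin
lemma f_strictD: "x \<ge> 0 \<Longrightarrow> y \<ge> 0 \<Longrightarrow> x \<noteq> y \<Longrightarrow> 0 < u \<Longrightarrow> u < 1 \<Longrightarrow>
   f ((1 - u) * x + u * y) < (1 - u) * f x + u * f y"
  using f_strict unfolding strictly_convex_on_def by blast

lemma tangent_strict:
  assumes t0: "t0 \<ge> 0" and t: "t \<ge> 0" and ne: "t \<noteq> t0"
  shows "f t > f t0 + f' t0 * (t - t0)"
proof -
  define m where "m = (1 - 1/2) * t0 + (1/2) * t"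
  have m0: "m \<ge> 0" using t0 t unfolding m_def by simp
  have "f m < (1 - 1/2) * f t0 + (1/2) * f t"
    unfolding m_def by (rule f_strictD) (use t0 t ne in auto)
  moreover have "f m \<ge> f t0 + f' t0 * (m - t0)"
    using tangent[OF t0 m0] .
  moreover have "m - t0 = (t - t0) / 2" unfolding m_def by (simp add: field_simps)
  ultimately show ?thesis by (simp add: field_simps)
qed

lemma f'_strict_mono: assumes "0 \<le> x" "x < y" shows "f' x < f' y"
proof -
  have 1: "f y > f x + f' x * (y - x)" using tangent_strict[of x y] assms by simp
  have 2: "f x > f y + f' y * (x - y)" using tangent_strict[of y x] assms by simp
  have "(f' y - f' x) * (y - x) > 0" using 1 2 by (simp add: algebra_simps)
  then show ?thesis using assms by (simp add: zero_less_mult_iff)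
qed

lemma f'_mono: "0 \<le> x \<Longrightarrow> x \<le> y \<Longrightarrow> f' x \<le> f' y"
  using f'_strict_mono[of x y] by (cases "x = y") auto

definition kp :: "real \<Rightarrow> real" where "kp s = k (max 0 s)"

lemma kp_nonneg: "kp s \<ge> 0" using kk unfolding kp_def by auto
lemma f'_kp: "f' (kp s) = max 0 s" using kk unfolding kp_def by auto

lemma kp_mono: assumes "s \<le> s'" shows "kp s \<le> kp s'"
proof (rule ccontr)
  assume "\<not> kp s \<le> kp s'"
  then have "f' (kp s') < f' (kp s)" using f'_strict_mono kp_nonneg by (simp add: not_le)
  then have "max 0 s' < max 0 s" by (simp add: f'_kp)
  then show False using assms by linarith
qed

lemma kp_zero: assumes "s \<le> 0" shows "kp s = 0"
proof (rule ccontr)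
  assume "kp s \<noteq> 0"
  then have "0 < kp s" using kp_nonneg[of s] by linarith
  then have "f' 0 < f' (kp s)" using f'_strict_mono by simp
  then show False using f'_kp[of s] assms f'0 by simp
qed
end

context fk begin
lemma kp_pos: "s > 0 \<Longrightarrow> kp s > 0"
  using f'_kp[of s] f'0 kp_nonneg[of s] by (metis less_eq_real_def max.absorb2 order_less_irrefl)

lemma kp_cont: "isCont kp s0"
  unfolding isCont_def LIM_eq
proof (intro allI impI)
  fix e :: real assume e: "e > 0"
  define t0 where "t0 = kp s0"
  have t0: "t0 \<ge> 0" unfolding t0_def by (rule kp_nonneg)
  define s1 where "s1 = f' (t0 + e)"
  have s1: "s1 > max 0 s0" unfolding s1_def using f'_strict_mono[OF t0, of "t0+e"] e f'_kp t0_def by simp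
  have up: "kp s < t0 + e" if "max 0 s < s1" for s
  proof (rule ccontr)
    assume "\<not> kp s < t0 + e"
    then have "f' (t0 + e) \<le> f' (kp s)" using f'_mono[of "t0+e" "kp s"] t0 e by simp
    then show False using that f'_kp s1_def by simp
  qed
  show "\<exists>d>0. \<forall>x. x \<noteq> s0 \<and> norm (x - s0) < d \<longrightarrow> norm (kp x - kp s0) < e"
  proof (cases "t0 - e < 0")
    case True
    show ?thesis
    proof (intro exI[of _ "s1 - max 0 s0"] conjI allI impI)
      show "s1 - max 0 s0 > 0" using s1 by simp
      fix x assume "x \<noteq> s0 \<and> norm (x - s0) < s1 - max 0 s0"
      then have "max 0 x < s1" by auto
      then show "norm (kp x - kp s0) < e" using up[of x] kp_nonneg[of x] True t0_def by auto
    qed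
  next
    case False
    define s2 where "s2 = f' (t0 - e)"
    have s2: "s2 < max 0 s0" unfolding s2_def using f'_strict_mono[of "t0 - e" t0] e False f'_kp t0_def by simp
    have s20: "s2 \<ge> 0" unfolding s2_def using f'_mono[of 0 "t0 - e"] False f'0 by simp
    have lo: "kp s > t0 - e" if "s > s2" for s
    proof (rule ccontr)
      assume "\<not> kp s > t0 - e"
      then have "f' (kp s) \<le> f' (t0 - e)" using f'_mono[of "kp s" "t0-e"] kp_nonneg by simp
      then show False using that f'_kp s2_def s20 by simp
    qed
    show ?thesis
    proof (intro exI[of _ "min (s1 - max 0 s0) (max 0 s0 - s2)"] conjI allI impI)
      show "min (s1 - max 0 s0) (max 0 s0 - s2) > 0" using s1 s2 by simp
      fix x assume x: "x \<noteq> s0 \<and> norm (x - s0) < min (s1 - max 0 s0) (max 0 s0 - s2)"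
      then have "max 0 x < s1" "x > s2" using s20 s2 by auto
      then show "norm (kp x - kp s0) < e" using up[of x] lo[of x] t0_def by auto
    qed
  qed
qed

end

context fk begin
definition fs :: "real \<Rightarrow> real" where "fs s = s * kp s - f (kp s)"

lemma fenchel: assumes t: "t \<ge> 0" shows "s * t - f t \<le> fs s"
proof (cases "s \<ge> 0")
  case True
  have "f t \<ge> f (kp s) + max 0 s * (t - kp s)" using tangent[OF kp_nonneg t] f'_kp by simp
  then show ?thesis unfolding fs_def using True by (simp add: algebra_simps)
next
  case False
  then have "kp s = 0" using kp_zero by simp
  moreover have "s * t \<le> 0" using False t by (simp add: mult_nonpos_nonneg)
  moreover have "f t \<ge> 0" using f_nonneg t by simp
  ultimately show ?thesis unfolding fs_def using f0 by simp
qed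

lemma fenchel_strict: assumes t: "t \<ge> 0" and ne: "t \<noteq> kp s" shows "s * t - f t < fs s"
proof (cases "s \<ge> 0")
  case True
  have "f t > f (kp s) + max 0 s * (t - kp s)" using tangent_strict[OF kp_nonneg t ne] f'_kp by simp
  then show ?thesis unfolding fs_def using True by (simp add: algebra_simps)
next
  case False
  then have "kp s = 0" using kp_zero by simp
  then have "t > 0" using ne t by simp
  then have "s * t < 0" using False by (simp add: mult_neg_pos)
  moreover have "f t \<ge> 0" using f_nonneg t by simp
  ultimately show ?thesis unfolding fs_def using f0 \<open>kp s = 0\<close> by simp
qed

lemma fs_support: "fs s' \<ge> fs s + kp s * (s' - s)"
proof -
  have "s' * kp s - f (kp s) \<le> fs s'" by (rule fenchel[OF kp_nonneg])
  then show ?thesis unfolding fs_def by (simp add: algebra_simps)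
qed

lemma fs_nonneg: "fs s \<ge> 0"
  using fenchel[of 0 s] f0 by simp

lemma fs_zero: "s \<le> 0 \<Longrightarrow> fs s = 0"
  using kp_zero[of s] f0 unfolding fs_def by simp

lemma fs_mono: assumes "s \<le> s'" shows "fs s \<le> fs s'"
proof -
  have "kp s * (s' - s) \<ge> 0" using kp_nonneg[of s] assms by simp
  then show ?thesis using fs_support[of s s'] by linarith
qed

lemma fs_lip: "\<bar>fs s' - fs s\<bar> \<le> max (kp s) (kp s') * \<bar>s' - s\<bar>"
proof -
  have a: "fs s' - fs s \<ge> kp s * (s' - s)" using fs_support[of s s'] by simp
  have b: "fs s - fs s' \<ge> kp s' * (s - s')" using fs_support[of s' s] by simp
  have c: "kp s \<le> max (kp s) (kp s')" "kp s' \<le> max (kp s) (kp s')" by auto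
  show ?thesis
  proof (cases "s \<le> s'")
    case True
    have "fs s' - fs s \<le> kp s' * (s' - s)" using b by (simp add: algebra_simps)
    also have "\<dots> \<le> max (kp s) (kp s') * (s' - s)" using c True by (intro mult_right_mono) auto
    finally have u: "fs s' - fs s \<le> max (kp s) (kp s') * (s' - s)" .
    have "kp s * (s' - s) \<ge> 0" using kp_nonneg[of s] True by simp
    then have "fs s' - fs s \<ge> 0" using a by linarith
    then show ?thesis using u True by simp
  next
    case False
    have "fs s - fs s' \<le> kp s * (s - s')" using a by (simp add: algebra_simps)
    also have "\<dots> \<le> max (kp s) (kp s') * (s - s')" using c False by (intro mult_right_mono) auto
    finally have u: "fs s - fs s' \<le> max (kp s) (kp s') * (s - s')" .
    have "kp s' * (s - s') \<ge> 0" using kp_nonneg[of s'] False by simp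
    then have "fs s - fs s' \<ge> 0" using b by linarith
    then show ?thesis using u False by simp
  qed
qed
end

lemma bw_fin0:
  fixes X :: "nat \<Rightarrow> 'i \<Rightarrow> real"
  assumes "finite J"
  shows "(\<forall>n. \<forall>j\<in>J. \<bar>X n j\<bar> \<le> B) \<longrightarrow> (\<exists>r L. strict_mono r \<and> (\<forall>j\<in>J. (\<lambda>n. X (r n) j) \<longlonglongrightarrow> L j))"
  using assms
proof induct
  case empty
  show ?case by (intro impI exI[of _ id]) (auto simp: strict_mono_def)
next
  case (insert j J)
  show ?case
  proof
    assume bnd: "\<forall>n. \<forall>j\<in>insert j J. \<bar>X n j\<bar> \<le> B"
    then obtain r L where r: "strict_mono r" and L: "\<forall>j\<in>J. (\<lambda>n. X (r n) j) \<longlonglongrightarrow> L j"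
      using insert by auto
    have "\<forall>n. X (r n) j \<in> {-B..B}"
    proof
      fix n have "\<bar>X (r n) j\<bar> \<le> B" using bnd by blast
      then show "X (r n) j \<in> {-B..B}" by (auto simp: abs_le_iff)
    qed
    then obtain l s where s: "strict_mono s" and l: "((\<lambda>n. X (r n) j) \<circ> s) \<longlonglongrightarrow> l"
      using seq_compactE[OF compact_imp_seq_compact[OF compact_Icc]] by metis
    show "\<exists>r L. strict_mono r \<and> (\<forall>j\<in>insert j J. (\<lambda>n. X (r n) j) \<longlonglongrightarrow> L j)"
    proof (intro exI conjI ballI)
      show "strict_mono (r \<circ> s)" using r s by (rule strict_mono_o)
      fix j' assume j': "j' \<in> insert j J"
      show "(\<lambda>n. X ((r \<circ> s) n) j') \<longlonglongrightarrow> (L(j := l)) j'"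
      proof (cases "j' = j")
        case True then show ?thesis using l by (simp add: o_def)
      next
        case False
        then have "j' \<in> J" using j' by simp
        then have "((\<lambda>n. X (r n) j') \<circ> s) \<longlonglongrightarrow> L j'" using L s by (intro LIMSEQ_subseq_LIMSEQ) auto
        then show ?thesis using False by (simp add: o_def)
      qed
    qed
  qed
qed

lemma bw_fin:
  fixes X :: "nat \<Rightarrow> 'i \<Rightarrow> real"
  assumes "finite J" and bnd: "\<And>n j. j \<in> J \<Longrightarrow> \<bar>X n j\<bar> \<le> B"
  shows "\<exists>r L. strict_mono r \<and> (\<forall>j\<in>J. (\<lambda>n. X (r n) j) \<longlonglongrightarrow> L j)"
  using bw_fin0[OF assms(1), of X B] bnd by blast

lemma L1: fixes s t u :: "nat \<Rightarrow> real" assumes "finite T"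
  shows "(\<Sum>i\<in>T. s i + t0 * (u i - s i)) = (\<Sum>i\<in>T. s i) + t0 * ((\<Sum>i\<in>T. u i) - (\<Sum>i\<in>T. s i))"
  by (simp add: sum.distrib sum_subtractf sum_distrib_left right_diff_distrib)
lemma L2: fixes M :: "nat set \<Rightarrow> real" and s u :: "nat set \<Rightarrow> nat \<Rightarrow> real"
  shows "(\<Sum>T\<in>TT. M T * (s T i + t0 * (u T i - s T i))) = (\<Sum>T\<in>TT. M T * s T i) + t0 * ((\<Sum>T\<in>TT. M T * u T i) - (\<Sum>T\<in>TT. M T * s T i))"
  by (simp add: sum.distrib sum_subtractf sum_distrib_left right_diff_distrib distrib_left mult.left_commute)
lemma L3: fixes e d :: "nat \<Rightarrow> real"
  shows "(\<Sum>i<m. (e i - t0 * d i)\<^sup>2) = (\<Sum>i<m. (e i)\<^sup>2) - 2 * t0 * (\<Sum>i<m. e i * d i) + t0\<^sup>2 * (\<Sum>i<m. (d i)\<^sup>2)"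
proof -
  have "(\<Sum>i<m. (e i - t0 * d i)\<^sup>2) = (\<Sum>i<m. (e i)\<^sup>2 - 2 * t0 * (e i * d i) + t0\<^sup>2 * (d i)\<^sup>2)"
    by (intro sum.cong) (auto simp: power2_eq_square algebra_simps)
  also have "\<dots> = (\<Sum>i<m. (e i)\<^sup>2) - (\<Sum>i<m. 2 * t0 * (e i * d i)) + (\<Sum>i<m. t0\<^sup>2 * (d i)\<^sup>2)"
    by (simp only: sum.distrib sum_subtractf)
  also have "\<dots> = (\<Sum>i<m. (e i)\<^sup>2) - 2 * t0 * (\<Sum>i<m. e i * d i) + t0\<^sup>2 * (\<Sum>i<m. (d i)\<^sup>2)"
    by (simp only: sum_distrib_left)
  finally show ?thesis .
qed
lemma L4: fixes e :: "nat \<Rightarrow> real" and M :: "nat set \<Rightarrow> real" and s :: "nat set \<Rightarrow> nat \<Rightarrow> real"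
  shows "(\<Sum>i<m. e i * (\<Sum>T\<in>TT. M T * s T i)) = (\<Sum>T\<in>TT. M T * (\<Sum>i<m. e i * s T i))"
proof -
  have "(\<Sum>i<m. e i * (\<Sum>T\<in>TT. M T * s T i)) = (\<Sum>i<m. \<Sum>T\<in>TT. M T * (e i * s T i))"
    by (simp add: sum_distrib_left mult.left_commute)
  also have "\<dots> = (\<Sum>T\<in>TT. \<Sum>i<m. M T * (e i * s T i))" by (rule sum.swap)
  also have "\<dots> = (\<Sum>T\<in>TT. M T * (\<Sum>i<m. e i * s T i))" by (simp add: sum_distrib_left)
  finally show ?thesis .
qed

lemma split_exists:
  fixes \<T> :: "nat set set" and M :: "nat set \<Rightarrow> real" and a :: "nat \<Rightarrow> real"
  assumes fin: "finite \<T>" and T: "\<And>T. T \<in> \<T> \<Longrightarrow> T \<noteq> {} \<and> T \<subseteq> {..<m}"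
    and hyp: "\<And>e. (\<Sum>i<m. e i * a i) \<le> (\<Sum>T\<in>\<T>. M T * Max (e ` T))"
  shows "\<exists>\<sigma>. (\<forall>T\<in>\<T>. \<forall>i. 0 \<le> \<sigma> T i \<and> (i \<notin> T \<longrightarrow> \<sigma> T i = 0)) \<and>
             (\<forall>T\<in>\<T>. (\<Sum>i\<in>T. \<sigma> T i) = 1) \<and> (\<forall>i<m. (\<Sum>T\<in>\<T>. M T * \<sigma> T i) = a i)"
proof -
  have Tfin: "finite T" if "T \<in> \<T>" for T using T[OF that] finite_subset by blast
  define F where "F = {\<sigma> :: nat set \<Rightarrow> nat \<Rightarrow> real. (\<forall>T\<in>\<T>. \<forall>i. 0 \<le> \<sigma> T i \<and> (i \<notin> T \<longrightarrow> \<sigma> T i = 0)) \<and> (\<forall>T\<in>\<T>. (\<Sum>i\<in>T. \<sigma> T i) = 1)}"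
  define P where "P \<sigma> i = (\<Sum>T\<in>\<T>. M T * \<sigma> T i)" for \<sigma> :: "nat set \<Rightarrow> nat \<Rightarrow> real" and i
  define g where "g \<sigma> = (\<Sum>i<m. (a i - P \<sigma> i)\<^sup>2)" for \<sigma>
  define \<sigma>0 where "\<sigma>0 T i = (if i = Min T then 1 else (0::real))" for T :: "nat set" and i
  have "\<sigma>0 \<in> F" unfolding F_def \<sigma>0_def
  proof (intro CollectI conjI ballI allI impI)
    fix T i assume "T \<in> \<T>" "i \<notin> T"
    then show "(if i = Min T then 1 else 0) = (0::real)" using Min_in[OF Tfin] T by auto
  next
    fix T assume "T \<in> \<T>"
    then have "Min T \<in> T" using Min_in[OF Tfin] T by auto
    then show "(\<Sum>i\<in>T. if i = Min T then 1 else 0) = (1::real)"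
      using Tfin[OF \<open>T \<in> \<T>\<close>] by (simp add: sum.delta')
  qed auto
  then have Fne: "F \<noteq> {}" by auto
  define G where "G = Inf (g ` F)"
  have g0: "g \<sigma> \<ge> 0" for \<sigma> unfolding g_def by (intro sum_nonneg) auto
  have bdd: "bdd_below (g ` F)" by (rule bdd_belowI[of _ 0]) (use g0 in auto)
  have "\<exists>\<sigma>\<in>F. g \<sigma> < G + 1 / (Suc n)" for n
  proof -
    have "Inf (g ` F) < G + 1 / Suc n" unfolding G_def by simp
    from cInf_lessD[OF _ this] Fne show ?thesis by auto
  qed
  then obtain \<sigma>s where \<sigma>sF: "\<And>n. \<sigma>s n \<in> F" and \<sigma>sg: "\<And>n. g (\<sigma>s n) < G + 1 / Suc n" by metis
  have bnd01: "0 \<le> \<sigma> T i \<and> \<sigma> T i \<le> 1" if "\<sigma> \<in> F" "T \<in> \<T>" for \<sigma> T i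
  proof (cases "i \<in> T")
    case True
    have nn: "\<forall>j\<in>T. 0 \<le> \<sigma> T j" using that unfolding F_def by auto
    have "\<sigma> T i \<le> (\<Sum>j\<in>T. \<sigma> T j)"
      using member_le_sum[of i T "\<sigma> T"] nn True Tfin[OF that(2)] by auto
    then show ?thesis using that unfolding F_def by auto
  next
    case False then show ?thesis using that unfolding F_def by auto
  qed
  define X where "X n j = \<sigma>s n (fst j) (snd j)" for n j
  have b: "\<bar>X n j\<bar> \<le> 1" if jJ: "j \<in> \<T> \<times> {..<m}" for n j
  proof -
    have "fst j \<in> \<T>" using jJ by auto
    then show ?thesis using bnd01[OF \<sigma>sF, of "fst j" n "snd j"] unfolding X_def by auto
  qed
  have "\<exists>r L. strict_mono r \<and> (\<forall>j\<in>\<T> \<times> {..<m}. (\<lambda>n. X (r n) j) \<longlonglongrightarrow> L j)"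
    by (rule bw_fin) (use b fin in auto)
  then obtain r L where r: "strict_mono r"
    and L0: "\<forall>j\<in>\<T> \<times> {..<m}. (\<lambda>n. X (r n) j) \<longlonglongrightarrow> L j" by blast
  have L: "(\<lambda>n. \<sigma>s (r n) T i) \<longlonglongrightarrow> L (T, i)" if "T \<in> \<T>" "i < m" for T i
    using L0 that unfolding X_def by auto
  define \<sigma>s' where "\<sigma>s' T i = (if T \<in> \<T> \<and> i \<in> T then L (T, i) else 0)" for T i
  have conv: "(\<lambda>n. \<sigma>s (r n) T i) \<longlonglongrightarrow> \<sigma>s' T i" if "T \<in> \<T>" for T i
  proof (cases "i \<in> T")
    case True
    then have "i < m" using that T by auto
    then show ?thesis using L[OF that] True that unfolding \<sigma>s'_def by auto
  next
    case False
    then have "\<sigma>s (r n) T i = 0" for n using \<sigma>sF[of "r n"] that unfolding F_def by auto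
    then show ?thesis using False unfolding \<sigma>s'_def by simp
  qed
  have \<sigma>F: "\<sigma>s' \<in> F" unfolding F_def
  proof (intro CollectI conjI ballI allI impI)
    fix T i assume "T \<in> \<T>"
    show "0 \<le> \<sigma>s' T i"
      by (rule LIMSEQ_le_const[OF conv[OF \<open>T \<in> \<T>\<close>, of i]]) (use bnd01[OF \<sigma>sF \<open>T \<in> \<T>\<close>] in blast)
  next
    fix T i assume "T \<in> \<T>" "i \<notin> T" then show "\<sigma>s' T i = 0" unfolding \<sigma>s'_def by auto
  next
    fix T assume "T \<in> \<T>"
    have "(\<lambda>n. \<Sum>i\<in>T. \<sigma>s (r n) T i) \<longlonglongrightarrow> (\<Sum>i\<in>T. \<sigma>s' T i)"
      by (intro tendsto_sum conv \<open>T \<in> \<T>\<close>)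
    moreover have "(\<lambda>n. \<Sum>i\<in>T. \<sigma>s (r n) T i) = (\<lambda>n. 1)"
      using \<sigma>sF \<open>T \<in> \<T>\<close> unfolding F_def by auto
    ultimately have "(\<lambda>n. 1::real) \<longlonglongrightarrow> (\<Sum>i\<in>T. \<sigma>s' T i)" by simp
    then show "(\<Sum>i\<in>T. \<sigma>s' T i) = 1" using LIMSEQ_unique[OF _ tendsto_const] by blast
  qed
  have gconv: "(\<lambda>n. g (\<sigma>s (r n))) \<longlonglongrightarrow> g \<sigma>s'"
    unfolding g_def P_def
    by (intro tendsto_sum tendsto_power tendsto_diff tendsto_const tendsto_mult conv) auto
  have "g (\<sigma>s (r n)) \<le> G + 1 / Suc n" for n
  proof -
    have "n \<le> r n" using r by (rule seq_suble)
    then have "1 / real (Suc (r n)) \<le> 1 / Suc n" by (intro divide_left_mono) auto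
    then show ?thesis using \<sigma>sg[of "r n"] by linarith
  qed
  moreover have "(\<lambda>n. G + 1 / real (Suc n)) \<longlonglongrightarrow> G + 0"
    by (intro tendsto_add tendsto_const LIMSEQ_inverse_real_of_nat[unfolded inverse_eq_divide])
  ultimately have "g \<sigma>s' \<le> G" using gconv by (intro LIMSEQ_le[OF gconv]) auto
  then have gmin: "g \<sigma>s' \<le> g \<tau>" if "\<tau> \<in> F" for \<tau>
    using cInf_lower[of "g \<tau>" "g ` F"] bdd that unfolding G_def by auto
  define e where "e i = a i - P \<sigma>s' i" for i
  have var: "(\<Sum>i<m. e i * (P \<tau> i - P \<sigma>s' i)) \<le> 0" if \<tau>F: "\<tau> \<in> F" for \<tau>
  proof (rule ccontr)
    define d where "d i = P \<tau> i - P \<sigma>s' i" for i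
    define S where "S = (\<Sum>i<m. e i * d i)"
    define Q where "Q = (\<Sum>i<m. (d i)\<^sup>2)"
    assume "\<not> (\<Sum>i<m. e i * (P \<tau> i - P \<sigma>s' i)) \<le> 0"
    then have S: "S > 0" unfolding S_def d_def by simp
    have Q: "Q \<ge> 0" unfolding Q_def by (intro sum_nonneg) auto
    define t where "t = min 1 (S / (Q + 1))"
    have t: "0 < t" "t \<le> 1" using S Q unfolding t_def by auto
    define \<rho> where "\<rho> T i = \<sigma>s' T i + t * (\<tau> T i - \<sigma>s' T i)" for T i
    have "\<rho> \<in> F" unfolding F_def
    proof (intro CollectI conjI ballI allI impI)
      fix T i assume "T \<in> \<T>"
      have "\<rho> T i = (1 - t) * \<sigma>s' T i + t * \<tau> T i" unfolding \<rho>_def by (simp add: algebra_simps)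
      then show "0 \<le> \<rho> T i" using t \<sigma>F \<tau>F \<open>T \<in> \<T>\<close> unfolding F_def by simp
    next
      fix T i assume "T \<in> \<T>" "i \<notin> T"
      then show "\<rho> T i = 0" using \<sigma>F \<tau>F unfolding F_def \<rho>_def by simp
    next
      fix T assume "T \<in> \<T>"
      then show "(\<Sum>i\<in>T. \<rho> T i) = 1" using \<sigma>F \<tau>F unfolding F_def \<rho>_def
        by (simp add: L1[OF Tfin])
    qed
    have P\<rho>: "P \<rho> i = P \<sigma>s' i + t * d i" for i
      unfolding P_def \<rho>_def d_def by (rule L2)
    have "g \<rho> = (\<Sum>i<m. (e i - t * d i)\<^sup>2)" unfolding g_def P\<rho> e_def by (simp add: algebra_simps)
    also have "\<dots> = g \<sigma>s' - 2 * t * S + t\<^sup>2 * Q"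
      unfolding L3 S_def Q_def by (simp add: g_def e_def)
    finally have "g \<sigma>s' \<le> g \<sigma>s' - 2 * t * S + t\<^sup>2 * Q" using gmin[OF \<open>\<rho> \<in> F\<close>] by simp
    then have "2 * t * S \<le> t * (t * Q)" by (simp add: power2_eq_square algebra_simps)
    then have "2 * S \<le> t * Q" using t by simp
    moreover have "t * Q \<le> S / (Q + 1) * Q" using Q t unfolding t_def by (intro mult_right_mono) auto
    moreover have "S / (Q + 1) * Q < S" using S Q by (simp add: field_simps)
    ultimately show False using S by linarith
  qed
  define j where "j T = (SOME i. i \<in> T \<and> e i = Max (e ` T))" for T
  have j: "j T \<in> T \<and> e (j T) = Max (e ` T)" if "T \<in> \<T>" for T
  proof -
    have "Max (e ` T) \<in> e ` T" using Tfin[OF that] T[OF that] by (intro Max_in) auto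
    then have "\<exists>i. i \<in> T \<and> e i = Max (e ` T)" by auto
    then show ?thesis unfolding j_def by (rule someI_ex)
  qed
  define \<tau> where "\<tau> T i = (if i = j T then 1 else (0::real))" for T i
  have \<tau>F: "\<tau> \<in> F" unfolding F_def \<tau>_def
  proof (intro CollectI conjI ballI allI impI)
    fix T i assume "T \<in> \<T>" "i \<notin> T"
    then show "(if i = j T then 1 else 0) = (0::real)" using j by auto
  next
    fix T assume "T \<in> \<T>"
    then show "(\<Sum>i\<in>T. if i = j T then 1 else 0) = (1::real)"
      using j Tfin by (simp add: sum.delta')
  qed auto
  have sumT: "(\<Sum>i<m. e i * \<sigma> T i) = (\<Sum>i\<in>T. e i * \<sigma> T i)" if "\<sigma> \<in> F" "T \<in> \<T>" for \<sigma> T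
    using that T[OF that(2)] unfolding F_def by (intro sum.mono_neutral_right) auto
  have eP: "(\<Sum>i<m. e i * P \<sigma> i) = (\<Sum>T\<in>\<T>. M T * (\<Sum>i\<in>T. e i * \<sigma> T i))" if "\<sigma> \<in> F" for \<sigma>
  proof -
    have "(\<Sum>i<m. e i * P \<sigma> i) = (\<Sum>T\<in>\<T>. M T * (\<Sum>i<m. e i * \<sigma> T i))"
      unfolding P_def by (rule L4)
    also have "\<dots> = (\<Sum>T\<in>\<T>. M T * (\<Sum>i\<in>T. e i * \<sigma> T i))"
      using sumT[OF that] by (intro sum.cong) auto
    finally show ?thesis .
  qed
  have "(\<Sum>i\<in>T. e i * \<tau> T i) = Max (e ` T)" if "T \<in> \<T>" for T
  proof -
    have "(\<Sum>i\<in>T. e i * \<tau> T i) = (\<Sum>i\<in>T. if i = j T then e i else 0)"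
      by (intro sum.cong) (auto simp: \<tau>_def)
    also have "\<dots> = e (j T)" using j[OF that] Tfin[OF that] by (simp add: sum.delta')
    finally show ?thesis using j[OF that] by simp
  qed
  then have "(\<Sum>i<m. e i * P \<tau> i) = (\<Sum>T\<in>\<T>. M T * Max (e ` T))"
    using eP[OF \<tau>F] by simp
  moreover have "(\<Sum>i<m. e i * P \<tau> i) \<le> (\<Sum>i<m. e i * P \<sigma>s' i)"
    using var[OF \<tau>F] by (simp add: right_diff_distrib sum_subtractf)
  ultimately have "(\<Sum>i<m. e i * a i) \<le> (\<Sum>i<m. e i * P \<sigma>s' i)" using hyp[of e] by linarith
  then have "(\<Sum>i<m. e i * (a i - P \<sigma>s' i)) \<le> 0" by (simp add: right_diff_distrib sum_subtractf)
  then have "(\<Sum>i<m. (e i)\<^sup>2) \<le> 0"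
    unfolding e_def by (simp add: power2_eq_square)
  then have "\<forall>i\<in>{..<m}. (e i)\<^sup>2 = 0"
    using sum_nonneg_eq_0_iff[of "{..<m}" "\<lambda>i. (e i)\<^sup>2"] by (simp add: order_antisym sum_nonneg)
  then have "\<forall>i<m. P \<sigma>s' i = a i" unfolding e_def by simp
  then have "\<forall>i<m. (\<Sum>T\<in>\<T>. M T * \<sigma>s' T i) = a i" unfolding P_def .
  moreover have "(\<forall>T\<in>\<T>. \<forall>i. 0 \<le> \<sigma>s' T i \<and> (i \<notin> T \<longrightarrow> \<sigma>s' T i = 0)) \<and> (\<forall>T\<in>\<T>. (\<Sum>i\<in>T. \<sigma>s' T i) = 1)"
    using \<sigma>F unfolding F_def by simp
  ultimately show ?thesis by blast
qed

locale main = fk f f' k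
  for f f' k :: "real \<Rightarrow> real" +
  fixes \<Omega> :: "'a::euclidean_space set"
    and p :: real and m :: nat and a :: "nat \<Rightarrow> real" and xs :: "nat \<Rightarrow> 'a"
    and \<nu> \<mu> :: "'a measure" and u :: "'a \<Rightarrow> real"
  assumes dom: "bounded_domain \<Omega>"
    and p: "p \<ge> 1"
    and atoms: "\<forall>i<m. xs i \<in> \<Omega> \<and> a i > 0"
    and atoms_distinct: "inj_on xs {..<m}"
    and a_sum: "(\<Sum>i<m. a i) = 1"
    and \<nu>_sets: "sets \<nu> = sets borel"
    and \<nu>_def: "\<forall>A\<in>sets borel. emeasure \<nu> A = (\<Sum>i<m. ennreal (a i) * indicator A (xs i))"
    and u_meas: "u \<in> borel_measurable borel"
    and u_nonneg: "\<forall>x. 0 \<le> u x"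
    and \<mu>_def: "\<mu> = density lborel (\<lambda>x. ennreal (u x))"
    and \<mu>_in: "\<mu> \<in> prob_on \<Omega>"
    and minimizer: "\<forall>\<rho>\<in>prob_on \<Omega>. frakF p f \<Omega> \<nu> \<mu> \<le> frakF p f \<Omega> \<nu> \<rho>"
begin

lemma m_pos: "m > 0"
  using a_sum by (cases m) auto

lemma a_pos: "i < m \<Longrightarrow> a i > 0" using atoms by auto
lemma xs_in: "i < m \<Longrightarrow> xs i \<in> \<Omega>" using atoms by auto

lemma \<Omega>_closed: "closed \<Omega>"
  using dom unfolding bounded_domain_def by auto

lemma \<Omega>_bounded: "bounded \<Omega>"
  using dom unfolding bounded_domain_def by auto

lemma \<Omega>_sets[measurable]: "\<Omega> \<in> sets borel"
  using \<Omega>_closed by (rule borel_closed)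

lemma \<Omega>_sets_lborel[measurable]: "\<Omega> \<in> sets lborel"
  using \<Omega>_sets by simp

lemma \<Omega>_fin: "emeasure lborel \<Omega> < \<infinity>"
  using \<Omega>_bounded by (rule emeasure_bounded_finite)

definition LL :: "'a measure" where "LL = restrict_space lborel \<Omega>"

lemma space_LL: "space LL = \<Omega>" unfolding LL_def by (simp add: space_restrict_space)

lemma LL_finite: "finite_measure LL"
proof
  have "emeasure LL (space LL) = emeasure lborel \<Omega>"
    unfolding space_LL unfolding LL_def by (rule emeasure_restrict_space) auto
  then show "emeasure LL (space LL) \<noteq> \<infinity>" using \<Omega>_fin by simp
qed

interpretation LLf: finite_measure LL by (rule LL_finite)

lemma f_cont: "continuous_on {0..} f"
proof -
  have "continuous (at t within {0..}) f" if "t \<in> {0..}" for t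
    using f_deriv that DERIV_continuous[of f "f' t" t "{0..}"] by auto
  then show ?thesis using continuous_on_eq_continuous_within by blast
qed

definition fp :: "real \<Rightarrow> real" where "fp t = f (max 0 t)"

lemma fp_cont: "continuous_on UNIV fp"
  unfolding fp_def
  by (rule continuous_on_compose2[OF f_cont]) (auto intro!: continuous_intros)

lemma kp_cont_on: "continuous_on UNIV kp"
  by (intro continuous_at_imp_continuous_on ballI kp_cont)

lemma fs_alt: "fs s = s * kp s - fp (kp s)"
  unfolding fs_def fp_def using kp_nonneg by simp

lemma kp_meas[measurable (raw)]: "g \<in> borel_measurable M \<Longrightarrow> (\<lambda>x. kp (g x)) \<in> borel_measurable M"
  by (rule borel_measurable_continuous_on[OF kp_cont_on])

lemma fp_meas[measurable (raw)]: "g \<in> borel_measurable M \<Longrightarrow> (\<lambda>x. fp (g x)) \<in> borel_measurable M"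
  by (rule borel_measurable_continuous_on[OF fp_cont])

lemma fs_meas[measurable (raw)]: assumes "g \<in> borel_measurable M" shows "(\<lambda>x. fs (g x)) \<in> borel_measurable M"
  unfolding fs_alt using assms by (intro borel_measurable_diff borel_measurable_times fp_meas kp_meas)

definition c :: "nat \<Rightarrow> 'a \<Rightarrow> real" where "c i x = dist x (xs i) powr p"

lemma c_meas[measurable]: "c i \<in> borel_measurable borel"
  unfolding c_def by measurable

lemma c_nonneg: "c i x \<ge> 0" unfolding c_def by simp

definition R0 :: real where "R0 = (SOME e. \<forall>y\<in>\<Omega>. dist (xs 0) y \<le> e)"

lemma R0: "y \<in> \<Omega> \<Longrightarrow> dist (xs 0) y \<le> R0"
proof -
  have "\<exists>e. \<forall>y\<in>\<Omega>. dist (xs 0) y \<le> e" using \<Omega>_bounded bounded_any_center by blast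
  then have "\<forall>y\<in>\<Omega>. dist (xs 0) y \<le> R0" unfolding R0_def by (rule someI_ex)
  then show "y \<in> \<Omega> \<Longrightarrow> dist (xs 0) y \<le> R0" by blast
qed

definition C0 :: real where "C0 = (2 * R0) powr p"

lemma c_le: assumes "x \<in> \<Omega>" "i < m" shows "c i x \<le> C0"
proof -
  have "dist x (xs i) \<le> dist (xs 0) x + dist (xs 0) (xs i)"
    by (metis dist_commute dist_triangle)
  also have "\<dots> \<le> 2 * R0" using R0[OF assms(1)] R0[OF xs_in[OF assms(2)]] by simp
  finally show ?thesis unfolding c_def C0_def using p by (intro powr_mono2) auto
qed

definition H :: "(nat \<Rightarrow> real) \<Rightarrow> 'a \<Rightarrow> real" where
  "H l x = Max ((\<lambda>i. l i - c i x) ` {..<m})"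

lemma H_meas[measurable]: "H l \<in> borel_measurable borel"
  unfolding H_def by measurable

lemma test_meas: "(\<lambda>x. fs (H l x) * kp (H l x)) \<in> borel_measurable borel"
  by measurable

lemma H_ge: "i < m \<Longrightarrow> l i - c i x \<le> H l x"
  unfolding H_def by (intro Max_ge) auto

lemma H_att: "\<exists>i<m. H l x = l i - c i x"
proof -
  have "H l x \<in> (\<lambda>i. l i - c i x) ` {..<m}" unfolding H_def using m_pos by (intro Max_in) auto
  then show ?thesis by auto
qed

definition Lmax :: "(nat \<Rightarrow> real) \<Rightarrow> real" where "Lmax l = Max (l ` {..<m})"

lemma Lmax_ge: "i < m \<Longrightarrow> l i \<le> Lmax l" unfolding Lmax_def by (intro Max_ge) auto
lemma Lmax_att: "\<exists>i<m. Lmax l = l i"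
proof -
  have "Lmax l \<in> l ` {..<m}" unfolding Lmax_def using m_pos by (intro Max_in) auto
  then show ?thesis by auto
qed

lemma H_le: "H l x \<le> Lmax l"
  using H_att[of l x] Lmax_ge c_nonneg by (smt (verit))

lemma H_low: "x \<in> \<Omega> \<Longrightarrow> H l x \<ge> Lmax l - C0"
  using Lmax_att[of l] H_ge[of _ l x] c_le[of x] by (smt (verit))

lemma H_diff: "\<bar>H l x - H l' x\<bar> \<le> (\<Sum>i<m. \<bar>l i - l' i\<bar>)"
proof -
  have one: "H l x - H l' x \<le> (\<Sum>i<m. \<bar>l i - l' i\<bar>)" for l l'
  proof -
    obtain i where i: "i < m" "H l x = l i - c i x" using H_att by blast
    have "\<bar>l i - l' i\<bar> \<le> (\<Sum>i<m. \<bar>l i - l' i\<bar>)"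
      using i(1) by (intro member_le_sum) auto
    then show ?thesis using i H_ge[OF i(1), of l' x] by linarith
  qed
  show ?thesis using one[of l l'] one[of l' l] by (simp add: abs_minus_commute abs_le_iff)
qed

end

context main begin

interpretation LLf: finite_measure LL by (rule LL_finite)

lemma LL_meas: "g \<in> borel_measurable borel \<Longrightarrow> g \<in> borel_measurable LL"
  unfolding LL_def by (rule measurable_restrict_space1) simp

lemma \<mu>_prob: "prob_space \<mu>" and \<mu>_out: "emeasure \<mu> (- \<Omega>) = 0"
  using \<mu>_in unfolding prob_on_def by auto

lemma u_meas_lborel[measurable]: "u \<in> borel_measurable lborel"
  using u_meas by simp

lemma u_total: "(\<integral>\<^sup>+x. ennreal (u x) \<partial>lborel) = 1"
proof -
  have "emeasure \<mu> (space \<mu>) = 1" using \<mu>_prob prob_space.emeasure_space_1 by blast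
  moreover have "space \<mu> = UNIV" unfolding \<mu>_def by simp
  ultimately show ?thesis unfolding \<mu>_def by (simp add: emeasure_density)
qed

lemma u_out: "AE x in lborel. x \<notin> \<Omega> \<longrightarrow> u x = 0"
proof -
  have "(\<integral>\<^sup>+x. ennreal (u x) * indicator (- \<Omega>) x \<partial>lborel) = 0"
    using \<mu>_out unfolding \<mu>_def by (subst (asm) emeasure_density) auto
  then have "AE x in lborel. ennreal (u x) * indicator (- \<Omega>) x = 0"
    by (subst (asm) nn_integral_0_iff_AE) auto
  then show ?thesis by eventually_elim (use u_nonneg in \<open>auto simp: indicator_def\<close>)
qed

lemma u_integrable: "integrable lborel u"
  using u_total u_nonneg by (intro integrableI_nn_integral_finite[where x=1]) auto

lemma u_integral: "integral\<^sup>L lborel u = 1"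
  using nn_integral_eq_integral[OF u_integrable] u_total u_nonneg by simp

lemma \<Omega>_pos: "emeasure lborel \<Omega> > 0"
proof (rule ccontr)
  assume "\<not> emeasure lborel \<Omega> > 0"
  then have "emeasure lborel \<Omega> = 0" by (simp add: zero_less_iff_neq_zero)
  then have "AE x in lborel. x \<notin> \<Omega>"
    by (subst AE_iff_measurable[of \<Omega>]) auto
  then have "AE x in lborel. ennreal (u x) = 0" using u_out by eventually_elim auto
  then have "(\<integral>\<^sup>+x. ennreal (u x) \<partial>lborel) = 0" by (simp add: nn_integral_0_iff_AE)
  then show False using u_total by simp
qed

definition v\<Omega> :: real where "v\<Omega> = measure lborel \<Omega>"

lemma v\<Omega>_pos: "v\<Omega> > 0"
  using \<Omega>_pos \<Omega>_fin unfolding v\<Omega>_def by (simp add: measure_def enn2real_positive_iff)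

lemma measure_LL: "measure LL (space LL) = v\<Omega>"
proof -
  have "emeasure LL (space LL) = emeasure lborel \<Omega>"
    unfolding space_LL unfolding LL_def by (rule emeasure_restrict_space) auto
  then show ?thesis unfolding v\<Omega>_def measure_def by simp
qed

lemma integral_LL_const: "(\<integral>x. C \<partial>LL) = v\<Omega> * C"
  using measure_LL by simp

lemma bounded_integrable_LL:
  fixes g :: "'a \<Rightarrow> real" and B :: real
  assumes "g \<in> borel_measurable borel" "\<And>x. x \<in> \<Omega> \<Longrightarrow> \<bar>g x\<bar> \<le> B"
  shows "integrable LL g"
  by (rule LLf.integrable_const_bound[where B=B]) (use assms LL_meas space_LL in auto)

definition D :: "(nat \<Rightarrow> real) \<Rightarrow> real" where
  "D l = (\<Sum>i<m. l i * a i) - (\<integral>x. fs (H l x) \<partial>LL)"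

lemma fsH_bound: "0 \<le> fs (H l x) \<and> fs (H l x) \<le> fs (Lmax l)"
  using fs_nonneg fs_mono[OF H_le] by simp

lemma fsH_int: "integrable LL (\<lambda>x. fs (H l x))"
  by (rule bounded_integrable_LL[where B="fs (Lmax l)"]) (use fsH_bound in auto)

lemma fsH_int_nonneg: "(\<integral>x. fs (H l x) \<partial>LL) \<ge> 0"
  using fsH_bound by (intro integral_nonneg_AE) auto

lemma a_le1: "i < m \<Longrightarrow> a i \<le> 1"
proof -
  assume i: "i < m"
  have "a i \<le> (\<Sum>j<m. a j)" using i a_pos by (intro member_le_sum) (auto intro: less_imp_le)
  then show ?thesis using a_sum by simp
qed

lemma suml_le: "(\<Sum>i<m. l i * a i) \<le> Lmax l"
proof -
  have "(\<Sum>i<m. l i * a i) \<le> (\<Sum>i<m. Lmax l * a i)"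
    using Lmax_ge a_pos by (intro sum_mono mult_right_mono) (auto intro: less_imp_le)
  also have "\<dots> = Lmax l" using a_sum by (simp add: sum_distrib_left[symmetric])
  finally show ?thesis .
qed

lemma D_le1: "D l \<le> Lmax l"
  unfolding D_def using suml_le[of l] fsH_int_nonneg[of l] by linarith

definition K1 :: real where "K1 = 2 * C0 + v\<Omega> * f (2 / v\<Omega>)"

lemma D_le2: "D l \<le> K1 - Lmax l"
proof -
  define T where "T = 2 / v\<Omega>"
  have T: "T \<ge> 0" unfolding T_def using v\<Omega>_pos by simp
  have pt: "(Lmax l - C0) * T - f T \<le> fs (H l x)" if "x \<in> \<Omega>" for x
  proof -
    have "(Lmax l - C0) * T - f T \<le> fs (Lmax l - C0)" by (rule fenchel[OF T])
    also have "\<dots> \<le> fs (H l x)" using H_low[OF that] by (rule fs_mono)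
    finally show ?thesis .
  qed
  have "(\<integral>x. (Lmax l - C0) * T - f T \<partial>LL) \<le> (\<integral>x. fs (H l x) \<partial>LL)"
    using pt space_LL by (intro integral_mono fsH_int) auto
  then have "v\<Omega> * ((Lmax l - C0) * T - f T) \<le> (\<integral>x. fs (H l x) \<partial>LL)"
    by (simp add: measure_LL)
  moreover have "v\<Omega> * ((Lmax l - C0) * T - f T) = 2 * (Lmax l - C0) - v\<Omega> * f T"
    unfolding T_def using v\<Omega>_pos by (simp add: field_simps)
  ultimately have "2 * (Lmax l - C0) - v\<Omega> * f T \<le> (\<integral>x. fs (H l x) \<partial>LL)" by simp
  then show ?thesis unfolding D_def K1_def T_def[symmetric] using suml_le[of l] by argo
qed

lemma D_le3: assumes i: "i < m" shows "D l \<le> a i * l i + (1 - a i) * Lmax l"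
proof -
  have "(\<Sum>j<m. l j * a j) = l i * a i + (\<Sum>j\<in>{..<m} - {i}. l j * a j)"
    using i by (simp add: sum.remove)
  also have "(\<Sum>j\<in>{..<m} - {i}. l j * a j) \<le> (\<Sum>j\<in>{..<m} - {i}. Lmax l * a j)"
    using Lmax_ge a_pos by (intro sum_mono mult_right_mono) (auto intro: less_imp_le)
  also have "(\<Sum>j\<in>{..<m} - {i}. Lmax l * a j) = Lmax l * (1 - a i)"
    using a_sum i by (simp add: sum_distrib_left[symmetric] sum_diff1)
  finally have "(\<Sum>j<m. l j * a j) \<le> a i * l i + (1 - a i) * Lmax l" by (simp add: algebra_simps)
  then show ?thesis unfolding D_def using fsH_int_nonneg[of l] by linarith
qed

lemma D_lip:
  assumes "Lmax l \<le> B" "Lmax l' \<le> B"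
  shows "\<bar>D l - D l'\<bar> \<le> (1 + v\<Omega> * kp B) * (\<Sum>i<m. \<bar>l i - l' i\<bar>)"
proof -
  define S where "S = (\<Sum>i<m. \<bar>l i - l' i\<bar>)"
  have S0: "S \<ge> 0" unfolding S_def by (simp add: sum_nonneg)
  have "\<bar>(\<Sum>i<m. l i * a i) - (\<Sum>i<m. l' i * a i)\<bar> = \<bar>\<Sum>i<m. (l i - l' i) * a i\<bar>"
    by (simp add: sum_subtractf left_diff_distrib)
  also have "\<dots> \<le> (\<Sum>i<m. \<bar>(l i - l' i) * a i\<bar>)" by (rule sum_abs)
  also have "\<dots> \<le> S" unfolding S_def
  proof (intro sum_mono)
    fix i assume "i \<in> {..<m}"
    then have "0 < a i" "a i \<le> 1" using a_pos a_le1 by auto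
    then show "\<bar>(l i - l' i) * a i\<bar> \<le> \<bar>l i - l' i\<bar>"
      by (simp add: abs_mult mult_left_le)
  qed
  finally have s1: "\<bar>(\<Sum>i<m. l i * a i) - (\<Sum>i<m. l' i * a i)\<bar> \<le> S" .
  have pt: "\<bar>fs (H l x) - fs (H l' x)\<bar> \<le> kp B * S" for x
  proof -
    have "\<bar>fs (H l x) - fs (H l' x)\<bar> \<le> max (kp (H l' x)) (kp (H l x)) * \<bar>H l x - H l' x\<bar>"
      by (rule fs_lip)
    also have "\<dots> \<le> kp B * S"
    proof (rule mult_mono)
      show "max (kp (H l' x)) (kp (H l x)) \<le> kp B"
        using kp_mono H_le assms by (metis max.bounded_iff order_trans)
      show "\<bar>H l x - H l' x\<bar> \<le> S" unfolding S_def by (rule H_diff)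
    qed (auto simp: kp_nonneg)
    finally show ?thesis .
  qed
  have "\<bar>(\<integral>x. fs (H l x) \<partial>LL) - (\<integral>x. fs (H l' x) \<partial>LL)\<bar> = \<bar>\<integral>x. fs (H l x) - fs (H l' x) \<partial>LL\<bar>"
    using fsH_int by simp
  also have "\<dots> \<le> (\<integral>x. kp B * S \<partial>LL)"
    using pt by (intro integral_abs_bound_integral Bochner_Integration.integrable_diff fsH_int LLf.integrable_const) auto
  also have "\<dots> = v\<Omega> * (kp B * S)" by (rule integral_LL_const)
  finally have s2: "\<bar>(\<integral>x. fs (H l x) \<partial>LL) - (\<integral>x. fs (H l' x) \<partial>LL)\<bar> \<le> v\<Omega> * kp B * S" by simp
  show ?thesis unfolding D_def using s1 s2 by (simp add: algebra_simps S_def[symmetric])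
qed

end

context main begin

lemma D_bdd: "D l \<le> K1 / 2"
  using D_le1[of l] D_le2[of l] by linarith

lemma D_max: "\<exists>l0. \<forall>l. D l \<le> D l0"
proof -
  define S where "S = Sup (range D)"
  have bdd: "bdd_above (range D)" by (rule bdd_aboveI[of _ "K1 / 2"]) (use D_bdd in auto)
  have DS: "D l \<le> S" for l unfolding S_def using bdd by (intro cSup_upper) auto
  have "\<exists>l. S - 1 / Suc n < D l" for n
  proof -
    have "S - 1 / Suc n < S" by simp
    from less_cSupD[OF _ this[unfolded S_def]] show ?thesis unfolding S_def by auto
  qed
  then obtain ls where ls: "\<And>n. S - 1 / Suc n < D (ls n)" by metis
  define D0 where "D0 = D (\<lambda>_. 0)"
  have lsD0: "D (ls n) \<ge> D0 - 1" for n
  proof -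
    have "1 / real (Suc n) \<le> 1" by simp
    then show ?thesis using ls[of n] DS[of "\<lambda>_. 0"] unfolding D0_def by linarith
  qed
  define B1 where "B1 = K1 - D0 + 1"
  have LB1: "Lmax (ls n) \<le> B1" for n using lsD0[of n] D_le2[of "ls n"] unfolding B1_def by linarith
  define amin where "amin = Min (a ` {..<m})"
  have amin: "amin > 0" "\<And>i. i < m \<Longrightarrow> amin \<le> a i"
  proof -
    have "amin \<in> a ` {..<m}" unfolding amin_def using m_pos by (intro Min_in) auto
    then show "amin > 0" using a_pos by auto
    show "\<And>i. i < m \<Longrightarrow> amin \<le> a i" unfolding amin_def by (intro Min_le) auto
  qed
  define Bb where "Bb = \<bar>B1\<bar> + (\<bar>D0\<bar> + 1 + \<bar>B1\<bar>) / amin"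
  have bnd: "\<bar>ls n i\<bar> \<le> Bb" if "i < m" for n i
  proof -
    have up: "ls n i \<le> B1" using Lmax_ge[OF that, of "ls n"] LB1[of n] by linarith
    have ai: "0 < a i" "a i \<le> 1" using a_pos a_le1 that by auto
    have "(1 - a i) * Lmax (ls n) \<le> (1 - a i) * B1" using LB1 ai by (intro mult_left_mono) auto
    also have "\<dots> \<le> (1 - a i) * \<bar>B1\<bar>" using ai by (intro mult_left_mono) auto
    also have "\<dots> \<le> \<bar>B1\<bar>" using ai by (intro mult_left_le_one_le) auto
    finally have "a i * ls n i \<ge> D0 - 1 - \<bar>B1\<bar>" using D_le3[OF that, of "ls n"] lsD0[of n] by linarith
    then have "a i * ls n i \<ge> - (\<bar>D0\<bar> + 1 + \<bar>B1\<bar>)" by linarith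
    then have "ls n i \<ge> - (\<bar>D0\<bar> + 1 + \<bar>B1\<bar>) / a i" using ai by (simp add: divide_le_eq mult.commute)
    moreover have "(\<bar>D0\<bar> + 1 + \<bar>B1\<bar>) / a i \<le> (\<bar>D0\<bar> + 1 + \<bar>B1\<bar>) / amin"
      using amin ai that by (intro divide_left_mono) auto
    ultimately have "ls n i \<ge> - ((\<bar>D0\<bar> + 1 + \<bar>B1\<bar>) / amin)" by linarith
    moreover have q: "(\<bar>D0\<bar> + 1 + \<bar>B1\<bar>) / amin \<ge> 0" using amin by simp
    ultimately have "ls n i \<le> Bb" "- ls n i \<le> Bb"
      unfolding Bb_def using up abs_ge_self[of B1] abs_ge_zero[of B1] by linarith+
    then show ?thesis by (simp add: abs_le_iff)
  qed
  have "\<exists>r L. strict_mono r \<and> (\<forall>j\<in>{..<m}. (\<lambda>n. ls (r n) j) \<longlonglongrightarrow> L j)"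
    by (rule bw_fin) (use bnd in auto)
  then obtain r L where r: "strict_mono r" and L: "\<And>j. j < m \<Longrightarrow> (\<lambda>n. ls (r n) j) \<longlonglongrightarrow> L j" by blast
  define l0 where "l0 i = (if i < m then L i else 0)" for i
  have Ll0: "(\<lambda>n. ls (r n) j) \<longlonglongrightarrow> l0 j" if "j < m" for j using L[OF that] that unfolding l0_def by simp
  have Lmax0: "Lmax l0 \<le> B1"
  proof -
    obtain j where j: "j < m" "Lmax l0 = l0 j" using Lmax_att by blast
    have le: "ls (r n) j \<le> B1" for n using Lmax_ge[OF j(1), of "ls (r n)"] LB1[of "r n"] by linarith
    have "l0 j \<le> B1"
      by (rule LIMSEQ_le_const2[OF Ll0[OF j(1)]]) (use le in auto)
    then show ?thesis using j by simp
  qed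
  define Kc where "Kc = 1 + v\<Omega> * kp B1"
  have "(\<lambda>n. Kc * (\<Sum>i<m. \<bar>ls (r n) i - l0 i\<bar>)) \<longlonglongrightarrow> Kc * (\<Sum>i<m. \<bar>l0 i - l0 i\<bar>)"
    by (intro tendsto_mult tendsto_const tendsto_sum tendsto_rabs tendsto_diff Ll0) auto
  then have z: "(\<lambda>n. Kc * (\<Sum>i<m. \<bar>ls (r n) i - l0 i\<bar>)) \<longlonglongrightarrow> 0" by simp
  have "(\<lambda>n. D (ls (r n))) \<longlonglongrightarrow> D l0"
  proof (rule tendsto_sandwich[where f="\<lambda>n. D l0 - Kc * (\<Sum>i<m. \<bar>ls (r n) i - l0 i\<bar>)"
        and h="\<lambda>n. D l0 + Kc * (\<Sum>i<m. \<bar>ls (r n) i - l0 i\<bar>)"])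
    have lipn: "\<bar>D (ls (r n)) - D l0\<bar> \<le> Kc * (\<Sum>i<m. \<bar>ls (r n) i - l0 i\<bar>)" for n
      unfolding Kc_def by (rule D_lip[OF LB1 Lmax0])
    have "D l0 - Kc * (\<Sum>i<m. \<bar>ls (r n) i - l0 i\<bar>) \<le> D (ls (r n))" for n
      using abs_le_D2[OF lipn[of n]] by argo
    moreover have "D (ls (r n)) \<le> D l0 + Kc * (\<Sum>i<m. \<bar>ls (r n) i - l0 i\<bar>)" for n
      using abs_le_D1[OF lipn[of n]] by argo
    ultimately show "eventually (\<lambda>n. D l0 - Kc * (\<Sum>i<m. \<bar>ls (r n) i - l0 i\<bar>) \<le> D (ls (r n))) sequentially"
      "eventually (\<lambda>n. D (ls (r n)) \<le> D l0 + Kc * (\<Sum>i<m. \<bar>ls (r n) i - l0 i\<bar>)) sequentially"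
      by auto
    show "(\<lambda>n. D l0 - Kc * (\<Sum>i<m. \<bar>ls (r n) i - l0 i\<bar>)) \<longlonglongrightarrow> D l0"
      using tendsto_diff[OF tendsto_const z] by simp
    show "(\<lambda>n. D l0 + Kc * (\<Sum>i<m. \<bar>ls (r n) i - l0 i\<bar>)) \<longlonglongrightarrow> D l0"
      using tendsto_add[OF tendsto_const z] by simp
  qed
  moreover have "(\<lambda>n. S - 1 / real (Suc n)) \<longlonglongrightarrow> S - 0"
    by (intro tendsto_diff tendsto_const LIMSEQ_inverse_real_of_nat[unfolded inverse_eq_divide])
  moreover have "S - 1 / real (Suc n) \<le> D (ls (r n))" for n
  proof -
    have "n \<le> r n" using r by (rule seq_suble)
    then have "1 / real (Suc (r n)) \<le> 1 / Suc n" by (intro divide_left_mono) auto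
    then show ?thesis using ls[of "r n"] by linarith
  qed
  ultimately have "S - 0 \<le> D l0" by (intro LIMSEQ_le) auto
  then have "\<forall>l. D l \<le> D l0" using DS order_trans by fastforce
  then show ?thesis by blast
qed

end

context main begin

interpretation LLf: finite_measure LL by (rule LL_finite)

definition lst :: "nat \<Rightarrow> real" where "lst = (SOME l0. \<forall>l. D l \<le> D l0)"

lemma lst_max: "D l \<le> D lst"
  using someI_ex[OF D_max] unfolding lst_def by blast

definition Hs :: "'a \<Rightarrow> real" where "Hs x = H lst x"

lemma Hs_meas[measurable]: "Hs \<in> borel_measurable borel" unfolding Hs_def by simp

definition I :: "'a \<Rightarrow> nat set" where "I x = {i. i < m \<and> lst i - c i x = Hs x}"

lemma I_sub: "I x \<subseteq> {..<m}" unfolding I_def by auto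
lemma I_fin: "finite (I x)" using I_sub finite_subset by blast
lemma I_ne: "I x \<noteq> {}" using H_att[of lst x] unfolding I_def Hs_def by auto

definition E :: "(nat \<Rightarrow> real) \<Rightarrow> 'a \<Rightarrow> real" where "E e x = Max (e ` I x)"

lemma E_ge: "i \<in> I x \<Longrightarrow> e i \<le> E e x" unfolding E_def using I_fin by (intro Max_ge) auto
lemma E_att: "\<exists>i\<in>I x. E e x = e i"
proof -
  have "E e x \<in> e ` I x" unfolding E_def using I_fin I_ne by (intro Max_in) auto
  then show ?thesis by auto
qed

definition tn :: "nat \<Rightarrow> real" where "tn n = 1 / Suc n"
lemma tn_pos: "tn n > 0" unfolding tn_def by simp
lemma tn_nz[simp]: "tn n \<noteq> 0" using tn_pos[of n] by simp
lemma tn_abs[simp]: "\<bar>tn n\<bar> = tn n" using tn_pos[of n] by simp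
lemma tn_lim: "tn \<longlonglongrightarrow> 0"
  unfolding tn_def using LIMSEQ_inverse_real_of_nat by (simp add: inverse_eq_divide)

definition lt :: "(nat \<Rightarrow> real) \<Rightarrow> nat \<Rightarrow> nat \<Rightarrow> real" where "lt e n i = lst i + tn n * e i"

lemma H_lt_eventually: "eventually (\<lambda>n. H (lt e n) x = Hs x + tn n * E e x) sequentially"
proof -
  define v where "v i = lst i - c i x" for i
  have vle: "v i \<le> Hs x" if "i < m" for i unfolding v_def Hs_def using H_ge that by simp
  have vlt: "v i < Hs x" if "i \<in> {..<m} - I x" for i
    using vle[of i] that unfolding I_def v_def by auto
  have ev: "\<forall>i\<in>{..<m} - I x. eventually (\<lambda>n. tn n * (\<bar>e i\<bar> + \<bar>E e x\<bar>) < Hs x - v i) sequentially"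
  proof
    fix i assume i: "i \<in> {..<m} - I x"
    have "(\<lambda>n. tn n * (\<bar>e i\<bar> + \<bar>E e x\<bar>)) \<longlonglongrightarrow> 0 * (\<bar>e i\<bar> + \<bar>E e x\<bar>)"
      by (intro tendsto_mult tn_lim tendsto_const)
    then show "eventually (\<lambda>n. tn n * (\<bar>e i\<bar> + \<bar>E e x\<bar>) < Hs x - v i) sequentially"
      using vlt[OF i] by (intro order_tendstoD(2)) auto
  qed
  have "eventually (\<lambda>n. \<forall>i\<in>{..<m} - I x. tn n * (\<bar>e i\<bar> + \<bar>E e x\<bar>) < Hs x - v i) sequentially"
    by (rule eventually_ball_finite) (use ev in auto)
  then show ?thesis
  proof eventually_elim
    case (elim n)
    have t0: "tn n > 0" by (rule tn_pos)
    obtain j where j: "j \<in> I x" "E e x = e j" using E_att by blast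
    show "H (lt e n) x = Hs x + tn n * E e x"
      unfolding H_def
    proof (rule Max_eqI)
      show "finite ((\<lambda>i. lt e n i - c i x) ` {..<m})" by simp
      show "Hs x + tn n * E e x \<in> (\<lambda>i. lt e n i - c i x) ` {..<m}"
      proof
        show "j \<in> {..<m}" using j I_sub by auto
        show "Hs x + tn n * E e x = lt e n j - c j x"
          using j unfolding lt_def I_def by auto
      qed
      fix y assume "y \<in> (\<lambda>i. lt e n i - c i x) ` {..<m}"
      then obtain i where i: "i < m" "y = lt e n i - c i x" by auto
      show "y \<le> Hs x + tn n * E e x"
      proof (cases "i \<in> I x")
        case True
        then have "lst i - c i x = Hs x" unfolding I_def by auto
        moreover have "tn n * e i \<le> tn n * E e x" using E_ge[OF True] t0 by (intro mult_left_mono) auto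
        ultimately show ?thesis using i unfolding lt_def by simp
      next
        case False
        then have "tn n * (\<bar>e i\<bar> + \<bar>E e x\<bar>) < Hs x - v i" using elim i by auto
        moreover have "tn n * e i \<le> tn n * \<bar>e i\<bar>" using t0 by (intro mult_left_mono) auto
        moreover have "tn n * (- \<bar>E e x\<bar>) \<le> tn n * E e x"
          using t0 abs_ge_minus_self[of "E e x"] by (intro mult_left_mono) auto
        ultimately show ?thesis using i unfolding lt_def v_def by (simp add: algebra_simps)
      qed
    qed
  qed
qed

definition q :: "(nat \<Rightarrow> real) \<Rightarrow> nat \<Rightarrow> 'a \<Rightarrow> real" where
  "q e n x = (H (lt e n) x - Hs x) / tn n"

lemma q_meas[measurable]: "q e n \<in> borel_measurable borel"
  unfolding q_def Hs_def by simp

lemma q_lim: "(\<lambda>n. q e n x) \<longlonglongrightarrow> E e x"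
proof (rule Lim_transform_eventually[OF tendsto_const])
  show "eventually (\<lambda>n. E e x = q e n x) sequentially"
    using H_lt_eventually[of e x] by eventually_elim (use tn_pos in \<open>simp add: q_def\<close>)
qed

lemma E_meas[measurable]: "E e \<in> borel_measurable borel"
  by (rule borel_measurable_LIMSEQ_real[OF q_lim q_meas])

lemma q_bound: "\<bar>q e n x\<bar> \<le> (\<Sum>i<m. \<bar>e i\<bar>)"
proof -
  have "\<bar>H (lt e n) x - H lst x\<bar> \<le> (\<Sum>i<m. \<bar>lt e n i - lst i\<bar>)" by (rule H_diff)
  also have "\<dots> = tn n * (\<Sum>i<m. \<bar>e i\<bar>)"
    unfolding lt_def by (simp add: abs_mult sum_distrib_left)
  finally show ?thesis unfolding q_def Hs_def using tn_pos[of n] by (simp add: abs_divide divide_le_eq mult.commute)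
qed

lemma H_lt_le: "H (lt e n) x \<le> Lmax lst + (\<Sum>i<m. \<bar>e i\<bar>)"
proof -
  have "\<bar>q e n x\<bar> \<le> (\<Sum>i<m. \<bar>e i\<bar>)" by (rule q_bound)
  then have "H (lt e n) x - Hs x \<le> tn n * (\<Sum>i<m. \<bar>e i\<bar>)"
    unfolding q_def using tn_pos[of n] by (simp add: abs_divide abs_le_iff pos_divide_le_eq mult.commute)
  moreover have "tn n \<le> 1" unfolding tn_def by simp
  moreover have "(\<Sum>i<m. \<bar>e i\<bar>) \<ge> 0" by (simp add: sum_nonneg)
  ultimately have "H (lt e n) x - Hs x \<le> (\<Sum>i<m. \<bar>e i\<bar>)"
    by (smt (verit) mult_left_le_one_le tn_pos)
  then show ?thesis using H_le[of lst x] unfolding Hs_def by linarith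
qed

lemma dir_cond: "(\<Sum>i<m. e i * a i) \<le> (\<integral>x. kp (Hs x) * E e x \<partial>LL)"
proof -
  define s where "s n x = kp (H (lt e n) x) * q e n x" for n x
  define Se where "Se = (\<Sum>i<m. \<bar>e i\<bar>)"
  define W where "W = kp (Lmax lst + Se) * Se"
  have s_meas: "s n \<in> borel_measurable borel" for n unfolding s_def by measurable
  have s_bound: "\<bar>s n x\<bar> \<le> W" for n x
  proof -
    have "kp (H (lt e n) x) \<le> kp (Lmax lst + Se)" using H_lt_le unfolding Se_def by (rule kp_mono)
    then show ?thesis unfolding s_def W_def Se_def using q_bound kp_nonneg
      by (simp add: abs_mult) (intro mult_mono, auto)
  qed
  have s_int: "integrable LL (s n)" for n
    by (rule bounded_integrable_LL[OF s_meas]) (rule s_bound)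
  have ineq: "(\<Sum>i<m. e i * a i) \<le> (\<integral>x. s n x \<partial>LL)" for n
  proof -
    have Dle: "D (lt e n) \<le> D lst" by (rule lst_max)
    have sum_eq: "(\<Sum>i<m. lt e n i * a i) = (\<Sum>i<m. lst i * a i) + tn n * (\<Sum>i<m. e i * a i)"
      unfolding lt_def by (simp add: algebra_simps sum.distrib sum_distrib_left)
    have pt: "fs (H (lt e n) x) - fs (Hs x) \<le> tn n * s n x" for x
    proof -
      have "fs (Hs x) \<ge> fs (H (lt e n) x) + kp (H (lt e n) x) * (Hs x - H (lt e n) x)"
        by (rule fs_support)
      moreover have "tn n * s n x = kp (H (lt e n) x) * (H (lt e n) x - Hs x)"
        unfolding s_def q_def using tn_pos by simp
      ultimately show ?thesis by (simp add: algebra_simps)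
    qed
    have "tn n * (\<Sum>i<m. e i * a i) \<le> (\<integral>x. fs (H (lt e n) x) \<partial>LL) - (\<integral>x. fs (Hs x) \<partial>LL)"
      using Dle unfolding D_def sum_eq Hs_def by simp
    also have "\<dots> = (\<integral>x. fs (H (lt e n) x) - fs (Hs x) \<partial>LL)"
      unfolding Hs_def using fsH_int by simp
    also have "\<dots> \<le> (\<integral>x. tn n * s n x \<partial>LL)"
      using pt unfolding Hs_def
      by (intro integral_mono Bochner_Integration.integrable_diff fsH_int integrable_mult_right s_int) auto
    also have "\<dots> = tn n * (\<integral>x. s n x \<partial>LL)" by simp
    finally show ?thesis using tn_pos by simp
  qed
  have lim: "(\<lambda>n. \<integral>x. s n x \<partial>LL) \<longlonglongrightarrow> (\<integral>x. kp (Hs x) * E e x \<partial>LL)"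
  proof (rule integral_dominated_convergence[where w="\<lambda>_. W"])
    show "(\<lambda>x. kp (Hs x) * E e x) \<in> borel_measurable LL" by (intro LL_meas) measurable
    show "s n \<in> borel_measurable LL" for n using s_meas by (rule LL_meas)
    show "integrable LL (\<lambda>_. W)" by simp
    show "AE x in LL. (\<lambda>n. s n x) \<longlonglongrightarrow> kp (Hs x) * E e x"
    proof (intro AE_I2)
      fix x
      have e1: "eventually (\<lambda>n. s n x = kp (Hs x + tn n * E e x) * q e n x) sequentially"
        using H_lt_eventually[of e x] by eventually_elim (simp add: s_def)
      have "(\<lambda>n. kp (Hs x + tn n * E e x) * q e n x) \<longlonglongrightarrow> kp (Hs x + 0 * E e x) * E e x"
        by (intro tendsto_mult q_lim isCont_tendsto_compose[OF kp_cont] tendsto_add tendsto_const tn_lim)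
      then show "(\<lambda>n. s n x) \<longlonglongrightarrow> kp (Hs x) * E e x"
        using e1 by (simp add: Lim_transform_eventually eventually_mono)
    qed
    show "AE x in LL. norm (s n x) \<le> W" for n using s_bound by simp
  qed
  show ?thesis using ineq by (intro LIMSEQ_le_const[OF lim]) auto
qed

end

context main begin

interpretation LLf: finite_measure LL by (rule LL_finite)

definition TT :: "nat set set" where "TT = range I"

lemma TT_fin: "finite TT"
proof -
  have "TT \<subseteq> Pow {..<m}" unfolding TT_def using I_sub by auto
  then show ?thesis using finite_subset by blast
qed

lemma TT_props: "T \<in> TT \<Longrightarrow> T \<noteq> {} \<and> T \<subseteq> {..<m}"
  unfolding TT_def using I_ne I_sub by auto

lemma I_in_TT: "I x \<in> TT" unfolding TT_def by simp

lemma I_eq_pred: "T \<subseteq> {..<m} \<Longrightarrow> (I x = T) \<longleftrightarrow> (\<forall>i<m. (i \<in> T) = (lst i - c i x = Hs x))"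
  unfolding I_def by auto

lemma Iset_meas[measurable]: "T \<in> TT \<Longrightarrow> {x. I x = T} \<in> sets borel"
proof -
  assume T: "T \<in> TT"
  have "{x. I x = T} = {x \<in> space borel. \<forall>i<m. (i \<in> T) = (lst i - c i x = Hs x)}"
    using I_eq_pred[of T] TT_props[OF T] by auto
  also have "\<dots> \<in> sets borel" by measurable
  finally show ?thesis .
qed

lemma Iind_meas[measurable]: "T \<in> TT \<Longrightarrow> (\<lambda>x. indicator {x. I x = T} x :: real) \<in> borel_measurable borel"
  by (intro borel_measurable_indicator Iset_meas)

definition M :: "nat set \<Rightarrow> real" where
  "M T = (\<integral>x. kp (Hs x) * indicator {x. I x = T} x \<partial>LL)"

lemma kpHs_bound: "0 \<le> kp (Hs x) \<and> kp (Hs x) \<le> kp (Lmax lst)"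
  using kp_nonneg kp_mono[OF H_le[of lst x]] unfolding Hs_def by simp

lemma kpHs_int: "integrable LL (\<lambda>x. kp (Hs x) * g x)"
  if "g \<in> borel_measurable borel" "\<And>x. \<bar>g x\<bar> \<le> B" for g B
proof (rule bounded_integrable_LL[where B="kp (Lmax lst) * B"])
  show "(\<lambda>x. kp (Hs x) * g x) \<in> borel_measurable borel" using that(1) by measurable
  fix x show "\<bar>kp (Hs x) * g x\<bar> \<le> kp (Lmax lst) * B"
    using kpHs_bound[of x] that(2)[of x] by (simp add: abs_mult) (intro mult_mono, auto)
qed

lemma E_split: "kp (Hs x) * E e x = (\<Sum>T\<in>TT. Max (e ` T) * (kp (Hs x) * indicator {x. I x = T} x))"
proof -
  have "(\<Sum>T\<in>TT. Max (e ` T) * (kp (Hs x) * indicator {x. I x = T} x))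
      = (\<Sum>T\<in>TT. if T = I x then Max (e ` T) * kp (Hs x) else 0)"
    by (intro sum.cong) (auto simp: indicator_def)
  also have "\<dots> = Max (e ` I x) * kp (Hs x)" using TT_fin I_in_TT by (simp add: sum.delta')
  finally show ?thesis unfolding E_def by simp
qed

lemma dir_cond_TT: "(\<Sum>i<m. e i * a i) \<le> (\<Sum>T\<in>TT. M T * Max (e ` T))"
proof -
  have "(\<integral>x. kp (Hs x) * E e x \<partial>LL) = (\<integral>x. (\<Sum>T\<in>TT. Max (e ` T) * (kp (Hs x) * indicator {x. I x = T} x)) \<partial>LL)"
    using E_split by simp
  also have "\<dots> = (\<Sum>T\<in>TT. (\<integral>x. Max (e ` T) * (kp (Hs x) * indicator {x. I x = T} x) \<partial>LL))"
  proof (rule Bochner_Integration.integral_sum)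
    fix T assume T: "T \<in> TT"
    show "integrable LL (\<lambda>x. Max (e ` T) * (kp (Hs x) * indicator {x. I x = T} x))"
      using Iind_meas[OF T] by (intro integrable_mult_right kpHs_int[where B=1]) (auto simp: indicator_def)
  qed
  also have "\<dots> = (\<Sum>T\<in>TT. M T * Max (e ` T))" unfolding M_def by (simp add: mult.commute)
  finally show ?thesis using dir_cond[of e] by simp
qed

definition \<sigma> :: "nat set \<Rightarrow> nat \<Rightarrow> real" where
  "\<sigma> = (SOME \<sigma>. (\<forall>T\<in>TT. \<forall>i. 0 \<le> \<sigma> T i \<and> (i \<notin> T \<longrightarrow> \<sigma> T i = 0)) \<and>
             (\<forall>T\<in>TT. (\<Sum>i\<in>T. \<sigma> T i) = 1) \<and> (\<forall>i<m. (\<Sum>T\<in>TT. M T * \<sigma> T i) = a i))"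

lemma \<sigma>_props: "(\<forall>T\<in>TT. \<forall>i. 0 \<le> \<sigma> T i \<and> (i \<notin> T \<longrightarrow> \<sigma> T i = 0)) \<and>
             (\<forall>T\<in>TT. (\<Sum>i\<in>T. \<sigma> T i) = 1) \<and> (\<forall>i<m. (\<Sum>T\<in>TT. M T * \<sigma> T i) = a i)"
proof -
  have ex: "\<exists>\<sigma>. (\<forall>T\<in>TT. \<forall>i. 0 \<le> \<sigma> T i \<and> (i \<notin> T \<longrightarrow> \<sigma> T i = 0)) \<and>
             (\<forall>T\<in>TT. (\<Sum>i\<in>T. \<sigma> T i) = 1) \<and> (\<forall>i<m. (\<Sum>T\<in>TT. M T * \<sigma> T i) = a i)"
    by (rule split_exists[OF TT_fin]) (use TT_props dir_cond_TT in auto)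
  show ?thesis unfolding \<sigma>_def by (rule someI_ex[OF ex])
qed

lemma \<sigma>_nonneg: "T \<in> TT \<Longrightarrow> 0 \<le> \<sigma> T i" using \<sigma>_props by blast
lemma \<sigma>_zero: "T \<in> TT \<Longrightarrow> i \<notin> T \<Longrightarrow> \<sigma> T i = 0" using \<sigma>_props by blast
lemma \<sigma>_sum: "T \<in> TT \<Longrightarrow> (\<Sum>i\<in>T. \<sigma> T i) = 1" using \<sigma>_props by blast
lemma \<sigma>_mass: "i < m \<Longrightarrow> (\<Sum>T\<in>TT. M T * \<sigma> T i) = a i" using \<sigma>_props by blast

lemma \<sigma>_le1: "T \<in> TT \<Longrightarrow> \<sigma> T i \<le> 1"
proof -
  assume T: "T \<in> TT"
  show ?thesis
  proof (cases "i \<in> T")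
    case True
    have "\<sigma> T i \<le> (\<Sum>j\<in>T. \<sigma> T j)"
      using T True TT_props[OF T] finite_subset[of T "{..<m}"] \<sigma>_nonneg
      by (intro member_le_sum) auto
    then show ?thesis using \<sigma>_sum[OF T] by simp
  qed (use \<sigma>_zero[OF T] in simp)
qed

definition sI :: "nat \<Rightarrow> 'a \<Rightarrow> real" where
  "sI i x = (\<Sum>T\<in>TT. indicator {x. I x = T} x * \<sigma> T i)"

lemma sI_eq: "sI i x = \<sigma> (I x) i"
proof -
  have "sI i x = (\<Sum>T\<in>TT. if T = I x then \<sigma> T i else 0)"
    unfolding sI_def by (intro sum.cong) (auto simp: indicator_def)
  then show ?thesis using TT_fin I_in_TT by (simp add: sum.delta')
qed

lemma sI_meas[measurable]: "sI i \<in> borel_measurable borel"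
  unfolding sI_def by (intro borel_measurable_sum borel_measurable_times borel_measurable_indicator Iset_meas) auto

definition U :: "'a \<Rightarrow> real" where "U x = indicator \<Omega> x * kp (Hs x)"
definition w :: "nat \<Rightarrow> 'a \<Rightarrow> real" where "w i x = U x * sI i x"

lemma U_meas[measurable]: "U \<in> borel_measurable borel" unfolding U_def by measurable
lemma w_meas[measurable]: "w i \<in> borel_measurable borel" unfolding w_def by measurable

lemma U_nonneg: "U x \<ge> 0" unfolding U_def using kp_nonneg by simp
lemma w_nonneg: "w i x \<ge> 0" unfolding w_def sI_eq using U_nonneg \<sigma>_nonneg[OF I_in_TT] by simp
lemma U_le: "U x \<le> kp (Lmax lst)" unfolding U_def using kpHs_bound[of x] by (simp add: indicator_def)
lemma w_le: "w i x \<le> kp (Lmax lst)"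
proof -
  have "U x * \<sigma> (I x) i \<le> U x * 1"
    using U_nonneg[of x] \<sigma>_le1[OF I_in_TT, of x i] by (intro mult_left_mono) auto
  then show ?thesis unfolding w_def sI_eq using U_le[of x] by simp
qed

lemma w_zero: "i \<notin> I x \<Longrightarrow> w i x = 0" unfolding w_def sI_eq using \<sigma>_zero[OF I_in_TT] by simp

lemma sum_w: "(\<Sum>i<m. w i x) = U x"
proof -
  have "(\<Sum>i<m. w i x) = U x * (\<Sum>i<m. \<sigma> (I x) i)" unfolding w_def sI_eq by (simp add: sum_distrib_left)
  also have "(\<Sum>i<m. \<sigma> (I x) i) = (\<Sum>i\<in>I x. \<sigma> (I x) i)"
    using I_sub \<sigma>_zero[OF I_in_TT] by (intro sum.mono_neutral_right) auto
  also have "\<dots> = 1" using \<sigma>_sum[OF I_in_TT] .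
  finally show ?thesis by simp
qed

lemma U_out: "x \<notin> \<Omega> \<Longrightarrow> U x = 0" unfolding U_def by simp
lemma w_out: "x \<notin> \<Omega> \<Longrightarrow> w i x = 0" unfolding w_def using U_out by simp

lemma LL_to_lborel: "integral\<^sup>L LL g = (\<integral>x. indicator \<Omega> x * g x \<partial>lborel)" for g :: "'a \<Rightarrow> real"
  unfolding LL_def by (subst integral_restrict_space) auto

lemma bounded_integrable_lborel:
  fixes g :: "'a \<Rightarrow> real"
  assumes "g \<in> borel_measurable borel" "\<And>x. \<bar>g x\<bar> \<le> B" "\<And>x. x \<notin> \<Omega> \<Longrightarrow> g x = 0"
  shows "integrable lborel g"
proof -
  have "integrable LL g" by (rule bounded_integrable_LL[where B=B]) (use assms in auto)
  then have "integrable lborel (\<lambda>x. indicator \<Omega> x *\<^sub>R g x)"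
    unfolding LL_def by (subst (asm) integrable_restrict_space) auto
  moreover have "(\<lambda>x. indicator \<Omega> x *\<^sub>R g x) = g"
  proof
    fix x show "indicator \<Omega> x *\<^sub>R g x = g x" using assms(3)[of x] by (cases "x \<in> \<Omega>") auto
  qed
  ultimately show ?thesis by simp
qed

lemma w_int: "integrable lborel (w i)"
  by (rule bounded_integrable_lborel[where B="kp (Lmax lst)"]) (use w_nonneg w_le w_out in auto)

lemma U_int: "integrable lborel U"
  by (rule bounded_integrable_lborel[where B="kp (Lmax lst)"]) (use U_nonneg U_le U_out in auto)

lemma w_integral: "i < m \<Longrightarrow> (\<integral>x. w i x \<partial>lborel) = a i"
proof -
  assume i: "i < m"
  have "(\<integral>x. w i x \<partial>lborel) = (\<integral>x. indicator \<Omega> x * (\<Sum>T\<in>TT. \<sigma> T i * (kp (Hs x) * indicator {x. I x = T} x)) \<partial>lborel)"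
    unfolding w_def U_def sI_def by (intro Bochner_Integration.integral_cong) (auto simp: sum_distrib_left algebra_simps)
  also have "\<dots> = (\<integral>x. (\<Sum>T\<in>TT. \<sigma> T i * (kp (Hs x) * indicator {x. I x = T} x)) \<partial>LL)"
    by (simp add: LL_to_lborel)
  also have "\<dots> = (\<Sum>T\<in>TT. (\<integral>x. \<sigma> T i * (kp (Hs x) * indicator {x. I x = T} x) \<partial>LL))"
  proof (rule Bochner_Integration.integral_sum)
    fix T assume T: "T \<in> TT"
    show "integrable LL (\<lambda>x. \<sigma> T i * (kp (Hs x) * indicator {x. I x = T} x))"
      using Iind_meas[OF T] by (intro integrable_mult_right kpHs_int[where B=1]) (auto simp: indicator_def)
  qed
  also have "\<dots> = (\<Sum>T\<in>TT. M T * \<sigma> T i)" unfolding M_def by (simp add: mult.commute)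
  also have "\<dots> = a i" using \<sigma>_mass[OF i] .
  finally show ?thesis .
qed

lemma U_integral: "(\<integral>x. U x \<partial>lborel) = 1"
proof -
  have "(\<integral>x. U x \<partial>lborel) = (\<integral>x. (\<Sum>i<m. w i x) \<partial>lborel)" using sum_w by simp
  also have "\<dots> = (\<Sum>i<m. (\<integral>x. w i x \<partial>lborel))" by (rule Bochner_Integration.integral_sum) (rule w_int)
  also have "\<dots> = (\<Sum>i<m. a i)" using w_integral by simp
  finally show ?thesis using a_sum by simp
qed

lemma c_on_I: "i \<in> I x \<Longrightarrow> c i x = lst i - Hs x" unfolding I_def by auto

lemma cost_pt: "(\<Sum>i<m. w i x * c i x) = (\<Sum>i<m. w i x * lst i) - U x * Hs x"
proof -
  have "(\<Sum>i<m. w i x * c i x) = (\<Sum>i<m. w i x * lst i - w i x * Hs x)"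
  proof (intro sum.cong refl)
    fix i assume "i \<in> {..<m}"
    show "w i x * c i x = w i x * lst i - w i x * Hs x"
    proof (cases "i \<in> I x")
      case True then show ?thesis using c_on_I[OF True] by (simp add: right_diff_distrib)
    next
      case False then show ?thesis using w_zero[OF False] by simp
    qed
  qed
  also have "\<dots> = (\<Sum>i<m. w i x * lst i) - (\<Sum>i<m. w i x) * Hs x"
    by (simp add: sum_subtractf sum_distrib_right)
  finally show ?thesis using sum_w by simp
qed

end

context main begin

lemma space_\<nu>: "space \<nu> = UNIV"
  using sets_eq_imp_space_eq[OF \<nu>_sets] by simp

lemma \<nu>_point: "i < m \<Longrightarrow> emeasure \<nu> {xs i} = ennreal (a i)"
proof -
  assume i: "i < m"
  have "emeasure \<nu> {xs i} = (\<Sum>j<m. ennreal (a j) * indicator {xs i} (xs j))"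
    using \<nu>_def by simp
  also have "\<dots> = (\<Sum>j<m. if j = i then ennreal (a j) else 0)"
    using atoms_distinct i by (intro sum.cong) (auto simp: indicator_def inj_on_def)
  also have "\<dots> = ennreal (a i)" using i by simp
  finally show ?thesis .
qed

lemma sing_sets[measurable]: "{y} \<in> sets (borel :: 'a measure)"
  by (intro borel_closed) simp

lemma meas_\<nu>: assumes "h \<in> borel_measurable borel" shows "h \<in> borel_measurable \<nu>"
  by (subst measurable_cong_sets[OF \<nu>_sets refl]) (rule assms)

definition X :: "'a set" where "X = xs ` {..<m}"

lemma X_sets[measurable]: "X \<in> sets borel" unfolding X_def by (intro finite_imp_closed borel_closed) auto

lemma \<nu>_AE_X: "AE y in \<nu>. y \<in> X"
proof -
  have "emeasure \<nu> (- X) = (\<Sum>j<m. ennreal (a j) * indicator (- X) (xs j))"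
    using \<nu>_def by simp
  also have "\<dots> = 0" unfolding X_def by (intro sum.neutral) auto
  finally have "emeasure \<nu> (- X) = 0" .
  then show ?thesis by (subst AE_iff_measurable[of "- X"]) (auto simp: space_\<nu> \<nu>_sets)
qed

lemma \<nu>_integral:
  assumes g: "g \<in> borel_measurable borel"
  shows "(\<integral>\<^sup>+y. g y \<partial>\<nu>) = (\<Sum>i<m. ennreal (a i) * g (xs i))"
proof -
  have "(\<integral>\<^sup>+y. g y \<partial>\<nu>) = (\<integral>\<^sup>+y. (\<Sum>i<m. g (xs i) * indicator {xs i} y) \<partial>\<nu>)"
  proof (rule nn_integral_cong_AE)
    show "AE y in \<nu>. g y = (\<Sum>i<m. g (xs i) * indicator {xs i} y)"
      using \<nu>_AE_X
    proof eventually_elim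
      case (elim y)
      then obtain j where j: "j < m" "y = xs j" unfolding X_def by auto
      have "(\<Sum>i<m. g (xs i) * indicator {xs i} y) = (\<Sum>i<m. if i = j then g (xs i) else 0)"
        using j atoms_distinct by (intro sum.cong) (auto simp: indicator_def inj_on_def)
      then show ?case using j by simp
    qed
  qed
  also have "\<dots> = (\<Sum>i<m. (\<integral>\<^sup>+y. g (xs i) * indicator {xs i} y \<partial>\<nu>))"
    by (rule nn_integral_sum) (intro meas_\<nu>, measurable)
  also have "\<dots> = (\<Sum>i<m. g (xs i) * emeasure \<nu> {xs i})"
    by (intro sum.cong refl nn_integral_cmult_indicator) (simp add: \<nu>_sets)
  also have "\<dots> = (\<Sum>i<m. ennreal (a i) * g (xs i))"
    using \<nu>_point by (intro sum.cong) (auto simp: mult.commute)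
  finally show ?thesis .
qed

lemma \<nu>_prob: "prob_space \<nu>"
proof
  have "emeasure \<nu> UNIV = (\<Sum>j<m. ennreal (a j) * indicator UNIV (xs j))"
    by (rule \<nu>_def[rule_format]) simp
  also have "\<dots> = (\<Sum>j<m. ennreal (a j))" by simp
  also have "\<dots> = ennreal (\<Sum>j<m. a j)" using a_pos by (intro sum_ennreal) (auto intro: less_imp_le)
  finally show "emeasure \<nu> (space \<nu>) = 1" using a_sum space_\<nu> by simp
qed

interpretation \<nu>p: prob_space \<nu> by (rule \<nu>_prob)

definition Wt :: "'a \<times> 'a \<Rightarrow> real" where
  "Wt z = (\<Sum>i<m. (w i (fst z) / a i) * indicator {xs i} (snd z))"

lemma Wt_nonneg: "Wt z \<ge> 0"
  unfolding Wt_def using w_nonneg a_pos by (intro sum_nonneg mult_nonneg_nonneg divide_nonneg_pos) auto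

lemma sets_prod: "sets (lborel \<Otimes>\<^sub>M \<nu>) = sets (borel :: ('a \<times> 'a) measure)"
proof -
  have "sets (lborel \<Otimes>\<^sub>M \<nu>) = sets (borel \<Otimes>\<^sub>M (borel :: 'a measure))"
    by (rule sets_pair_measure_cong) (simp_all add: \<nu>_sets)
  also have "\<dots> = sets borel" unfolding borel_prod ..
  finally show ?thesis .
qed

lemma meas_prod: assumes "g \<in> borel_measurable (borel :: ('a \<times> 'a) measure)" shows "g \<in> borel_measurable (lborel \<Otimes>\<^sub>M \<nu>)"
  by (subst measurable_cong_sets[OF sets_prod refl]) (rule assms)

lemma fst_meas[measurable]: "fst \<in> (borel :: ('a \<times> 'a) measure) \<rightarrow>\<^sub>M (borel :: 'a measure)"
  by (intro borel_measurable_continuous_onI continuous_intros)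

lemma snd_meas[measurable]: "snd \<in> (borel :: ('a \<times> 'a) measure) \<rightarrow>\<^sub>M (borel :: 'a measure)"
  by (intro borel_measurable_continuous_onI continuous_intros)

lemma Wt_meas[measurable]: "Wt \<in> borel_measurable borel"
  unfolding Wt_def by measurable

definition \<gamma>s :: "('a \<times> 'a) measure" where
  "\<gamma>s = density (lborel \<Otimes>\<^sub>M \<nu>) (\<lambda>z. ennreal (Wt z))"

lemma sets_\<gamma>s: "sets \<gamma>s = sets borel"
  unfolding \<gamma>s_def using sets_prod by simp

lemma space_\<gamma>s: "space \<gamma>s = UNIV"
  using sets_eq_imp_space_eq[OF sets_\<gamma>s] by simp

lemma \<gamma>s_formula:
  assumes gk: "gk \<in> borel_measurable (borel :: ('a \<times> 'a) measure)"
  shows "(\<integral>\<^sup>+z. gk z \<partial>\<gamma>s) = (\<integral>\<^sup>+x. (\<Sum>j<m. ennreal (w j x) * gk (x, xs j)) \<partial>lborel)"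
proof -
  have mW: "(\<lambda>z. ennreal (Wt z)) \<in> borel_measurable (borel :: ('a \<times> 'a) measure)" by measurable
  have "(\<integral>\<^sup>+z. gk z \<partial>\<gamma>s) = (\<integral>\<^sup>+z. ennreal (Wt z) * gk z \<partial>(lborel \<Otimes>\<^sub>M \<nu>))"
    unfolding \<gamma>s_def by (rule nn_integral_density[OF meas_prod[OF mW] meas_prod[OF gk]])
  also have "\<dots> = (\<integral>\<^sup>+x. \<integral>\<^sup>+y. ennreal (Wt (x, y)) * gk (x, y) \<partial>\<nu> \<partial>lborel)"
    by (rule \<nu>p.nn_integral_fst[symmetric, OF meas_prod[OF borel_measurable_times_ennreal[OF mW gk]]])
  also have "\<dots> = (\<integral>\<^sup>+x. (\<Sum>j<m. ennreal (w j x) * gk (x, xs j)) \<partial>lborel)"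
  proof (rule nn_integral_cong)
    fix x :: 'a
    have km: "(\<lambda>y. gk (x, y)) \<in> borel_measurable borel" using gk by measurable
    have "(\<integral>\<^sup>+y. ennreal (Wt (x, y)) * gk (x, y) \<partial>\<nu>) = (\<Sum>j<m. ennreal (a j) * (ennreal (Wt (x, xs j)) * gk (x, xs j)))"
      by (rule \<nu>_integral) (use km in measurable)
    also have "\<dots> = (\<Sum>j<m. ennreal (w j x) * gk (x, xs j))"
    proof (intro sum.cong refl)
      fix j assume j: "j \<in> {..<m}"
      have "Wt (x, xs j) = (\<Sum>i<m. if i = j then w i x / a i else 0)"
        unfolding Wt_def using j atoms_distinct by (intro sum.cong) (auto simp: indicator_def inj_on_def)
      also have "\<dots> = w j x / a j" using j by simp
      finally have "ennreal (a j) * ennreal (Wt (x, xs j)) = ennreal (w j x)"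
        using a_pos[of j] j w_nonneg[of j x] by (simp add: ennreal_mult[symmetric])
      then show "ennreal (a j) * (ennreal (Wt (x, xs j)) * gk (x, xs j)) = ennreal (w j x) * gk (x, xs j)"
        by (simp add: mult.assoc[symmetric])
    qed
    finally show "(\<integral>\<^sup>+y. ennreal (Wt (x, y)) * gk (x, y) \<partial>\<nu>) = (\<Sum>j<m. ennreal (w j x) * gk (x, xs j))" .
  qed
  finally show ?thesis .
qed

end

context main begin

interpretation LLf: finite_measure LL by (rule LL_finite)

lemma f_mono0: assumes "0 \<le> t" "t \<le> K" shows "f t \<le> f K"
proof -
  have "f' t \<ge> 0" using f'_mono[of 0 t] f'0 assms by simp
  then have "f' t * (K - t) \<ge> 0" using assms by simp
  then show ?thesis using tangent[of t K] assms by linarith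
qed

lemma fp_kpHs_bound: "0 \<le> fp (kp (Hs x)) \<and> fp (kp (Hs x)) \<le> f (kp (Lmax lst))"
  unfolding fp_def using kpHs_bound[of x] f_nonneg f_mono0[of "kp (Hs x)" "kp (Lmax lst)"] by auto

definition \<rho>s :: "'a measure" where "\<rho>s = density lborel (\<lambda>x. ennreal (U x))"

lemma U_nn_total: "(\<integral>\<^sup>+x. ennreal (U x) \<partial>lborel) = 1"
  using nn_integral_eq_integral[OF U_int] U_nonneg U_integral by simp

lemma w_nn: "i < m \<Longrightarrow> (\<integral>\<^sup>+x. ennreal (w i x) \<partial>lborel) = ennreal (a i)"
  using nn_integral_eq_integral[OF w_int] w_nonneg w_integral by simp

lemma sum_w_ennreal: "(\<Sum>j<m. ennreal (w j x)) = ennreal (U x)"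
  using sum_w[of x] w_nonneg by (simp add: sum_ennreal)

lemma fst_meas_\<gamma>s: "fst \<in> \<gamma>s \<rightarrow>\<^sub>M (borel :: 'a measure)"
  by (subst measurable_cong_sets[OF sets_\<gamma>s refl]) (rule fst_meas)

lemma snd_meas_\<gamma>s: "snd \<in> \<gamma>s \<rightarrow>\<^sub>M (borel :: 'a measure)"
  by (subst measurable_cong_sets[OF sets_\<gamma>s refl]) (rule snd_meas)

lemma \<gamma>s_prob: "prob_space \<gamma>s"
proof
  have "emeasure \<gamma>s (space \<gamma>s) = (\<integral>\<^sup>+z. indicator UNIV z \<partial>\<gamma>s)"
    using space_\<gamma>s sets_\<gamma>s by simp
  also have "\<dots> = (\<integral>\<^sup>+x. (\<Sum>j<m. ennreal (w j x) * indicator UNIV (x, xs j)) \<partial>lborel)"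
    using \<gamma>s_formula[of "\<lambda>z. indicator UNIV z"] by simp
  also have "\<dots> = (\<integral>\<^sup>+x. ennreal (U x) \<partial>lborel)" using sum_w_ennreal by simp
  finally show "emeasure \<gamma>s (space \<gamma>s) = 1" using U_nn_total by simp
qed

lemma \<gamma>s_fst: "distr \<gamma>s borel fst = \<rho>s"
proof (rule measure_eqI)
  show "sets (distr \<gamma>s borel fst) = sets \<rho>s" unfolding \<rho>s_def by simp
  fix A assume A: "A \<in> sets (distr \<gamma>s borel fst)"
  then have A': "A \<in> sets borel" by simp
  have "emeasure (distr \<gamma>s borel fst) A = emeasure \<gamma>s (fst -` A \<inter> space \<gamma>s)"
    by (rule emeasure_distr[OF fst_meas_\<gamma>s A'])
  also have "\<dots> = (\<integral>\<^sup>+z. indicator A (fst z) \<partial>\<gamma>s)"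
  proof -
    have "fst -` A \<inter> space \<gamma>s \<in> sets \<gamma>s" using measurable_sets[OF fst_meas_\<gamma>s A'] .
    moreover have "(\<lambda>z. indicator A (fst z)) = (indicator (fst -` A \<inter> space \<gamma>s) :: _ \<Rightarrow> ennreal)"
      by (auto simp: space_\<gamma>s indicator_def)
    ultimately show ?thesis by simp
  qed
  also have "\<dots> = (\<integral>\<^sup>+x. (\<Sum>j<m. ennreal (w j x) * indicator A x) \<partial>lborel)"
    using \<gamma>s_formula[of "\<lambda>z. indicator A (fst z)"] A' by simp
  also have "\<dots> = (\<integral>\<^sup>+x. ennreal (U x) * indicator A x \<partial>lborel)"
    using sum_w_ennreal by (simp add: sum_distrib_right[symmetric])
  also have "\<dots> = emeasure \<rho>s A" unfolding \<rho>s_def using A' by (simp add: emeasure_density)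
  finally show "emeasure (distr \<gamma>s borel fst) A = emeasure \<rho>s A" .
qed

lemma \<gamma>s_snd: "distr \<gamma>s borel snd = \<nu>"
proof (rule measure_eqI)
  show "sets (distr \<gamma>s borel snd) = sets \<nu>" using \<nu>_sets by simp
  fix A assume A: "A \<in> sets (distr \<gamma>s borel snd)"
  then have A': "A \<in> sets borel" by simp
  have "emeasure (distr \<gamma>s borel snd) A = emeasure \<gamma>s (snd -` A \<inter> space \<gamma>s)"
    by (rule emeasure_distr[OF snd_meas_\<gamma>s A'])
  also have "\<dots> = (\<integral>\<^sup>+z. indicator A (snd z) \<partial>\<gamma>s)"
  proof -
    have "snd -` A \<inter> space \<gamma>s \<in> sets \<gamma>s" using measurable_sets[OF snd_meas_\<gamma>s A'] .
    moreover have "(\<lambda>z. indicator A (snd z)) = (indicator (snd -` A \<inter> space \<gamma>s) :: _ \<Rightarrow> ennreal)"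
      by (auto simp: space_\<gamma>s indicator_def)
    ultimately show ?thesis by simp
  qed
  also have "\<dots> = (\<integral>\<^sup>+x. (\<Sum>j<m. ennreal (w j x) * indicator A (xs j)) \<partial>lborel)"
    using \<gamma>s_formula[of "\<lambda>z. indicator A (snd z)"] A' by simp
  also have "\<dots> = (\<Sum>j<m. (\<integral>\<^sup>+x. ennreal (w j x) * indicator A (xs j) \<partial>lborel))"
    by (rule nn_integral_sum) simp
  also have "\<dots> = (\<Sum>j<m. ennreal (a j) * indicator A (xs j))"
  proof (intro sum.cong refl)
    fix j assume "j \<in> {..<m}"
    then show "(\<integral>\<^sup>+x. ennreal (w j x) * indicator A (xs j) \<partial>lborel) = ennreal (a j) * indicator A (xs j)"
      using w_nn[of j] by (simp add: nn_integral_multc)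
  qed
  also have "\<dots> = emeasure \<nu> A" using \<nu>_def A' by simp
  finally show "emeasure (distr \<gamma>s borel snd) A = emeasure \<nu> A" .
qed

lemma \<gamma>s_plan: "\<gamma>s \<in> transport_plans \<rho>s \<nu>"
  unfolding transport_plans_def using \<gamma>s_prob sets_\<gamma>s \<gamma>s_fst \<gamma>s_snd by auto

lemma \<rho>s_in: "\<rho>s \<in> prob_on \<Omega>"
  unfolding prob_on_def
proof (intro CollectI conjI)
  show "prob_space \<rho>s"
  proof
    show "emeasure \<rho>s (space \<rho>s) = 1" unfolding \<rho>s_def using U_nn_total by (simp add: emeasure_density)
  qed
  show "sets \<rho>s = sets borel" unfolding \<rho>s_def by simp
  have "emeasure \<rho>s (- \<Omega>) = (\<integral>\<^sup>+x. ennreal (U x) * indicator (- \<Omega>) x \<partial>lborel)"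
    unfolding \<rho>s_def by (rule emeasure_density) auto
  also have "(\<lambda>x. ennreal (U x) * indicator (- \<Omega>) x) = (\<lambda>x. 0)"
  proof
    fix x show "ennreal (U x) * indicator (- \<Omega>) x = 0" by (cases "x \<in> \<Omega>") (auto simp: U_out)
  qed
  finally show "emeasure \<rho>s (- \<Omega>) = 0" by simp
qed

lemma C0_nonneg: "C0 \<ge> 0" unfolding C0_def by simp

definition costf :: "'a \<Rightarrow> real" where "costf x = (\<Sum>j<m. w j x * c j x)"

lemma costf_meas[measurable]: "costf \<in> borel_measurable borel" unfolding costf_def by measurable

lemma costf_int: "integrable lborel costf"
proof (rule bounded_integrable_lborel[where B="real m * (kp (Lmax lst) * C0)"])
  show "costf \<in> borel_measurable borel" by simp
  fix x
  show "x \<notin> \<Omega> \<Longrightarrow> costf x = 0" unfolding costf_def using w_out by simp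
  show "\<bar>costf x\<bar> \<le> real m * (kp (Lmax lst) * C0)"
  proof (cases "x \<in> \<Omega>")
    case True
    have "\<bar>costf x\<bar> \<le> (\<Sum>j<m. \<bar>w j x * c j x\<bar>)" unfolding costf_def by (rule sum_abs)
    also have "\<dots> \<le> (\<Sum>j<m. kp (Lmax lst) * C0)"
    proof (intro sum_mono)
      fix j assume "j \<in> {..<m}"
      then show "\<bar>w j x * c j x\<bar> \<le> kp (Lmax lst) * C0"
        using w_nonneg[of j x] w_le[of j x] c_nonneg[of j x] c_le[OF True, of j]
        by (simp add: abs_mult) (intro mult_mono, auto)
    qed
    finally show ?thesis by simp
  next
    case False then show ?thesis unfolding costf_def using w_out kp_nonneg C0_nonneg by simp
  qed
qed

definition Acost :: real where "Acost = (\<Sum>i<m. lst i * a i) - (\<integral>x. kp (Hs x) * Hs x \<partial>LL)"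
definition Bf :: real where "Bf = (\<integral>x. fp (kp (Hs x)) \<partial>LL)"

lemma kpHs_Hs_int: "integrable LL (\<lambda>x. kp (Hs x) * Hs x)"
proof (rule bounded_integrable_LL[where B="kp (Lmax lst) * (\<bar>Lmax lst\<bar> + \<bar>C0\<bar>)"])
  show "(\<lambda>x. kp (Hs x) * Hs x) \<in> borel_measurable borel" by measurable
  fix x assume x: "x \<in> \<Omega>"
  have "\<bar>Hs x\<bar> \<le> \<bar>Lmax lst\<bar> + \<bar>C0\<bar>"
    using H_le[of lst x] H_low[OF x, of lst] unfolding Hs_def by linarith
  then show "\<bar>kp (Hs x) * Hs x\<bar> \<le> kp (Lmax lst) * (\<bar>Lmax lst\<bar> + \<bar>C0\<bar>)"
    using kpHs_bound[of x] by (simp add: abs_mult) (intro mult_mono, auto)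
qed

lemma fpkp_int: "integrable LL (\<lambda>x. fp (kp (Hs x)))"
  by (rule bounded_integrable_LL[where B="f (kp (Lmax lst))"]) (use fp_kpHs_bound in auto)

lemma costf_integral: "(\<integral>x. costf x \<partial>lborel) = Acost"
proof -
  have "(\<integral>x. costf x \<partial>lborel) = (\<integral>x. (\<Sum>j<m. w j x * lst j) - U x * Hs x \<partial>lborel)"
    unfolding costf_def using cost_pt by simp
  also have "\<dots> = (\<integral>x. (\<Sum>j<m. w j x * lst j) \<partial>lborel) - (\<integral>x. U x * Hs x \<partial>lborel)"
  proof (rule Bochner_Integration.integral_diff)
    show "integrable lborel (\<lambda>x. \<Sum>j<m. w j x * lst j)"
      by (intro Bochner_Integration.integrable_sum integrable_mult_left w_int)
    show "integrable lborel (\<lambda>x. U x * Hs x)"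
    proof -
      have "integrable lborel (\<lambda>x. indicator \<Omega> x *\<^sub>R (kp (Hs x) * Hs x))"
        using kpHs_Hs_int unfolding LL_def by (subst (asm) integrable_restrict_space) auto
      then show ?thesis unfolding U_def by (simp add: mult.assoc)
    qed
  qed
  also have "(\<integral>x. (\<Sum>j<m. w j x * lst j) \<partial>lborel) = (\<Sum>j<m. lst j * a j)"
  proof -
    have "(\<integral>x. (\<Sum>j<m. w j x * lst j) \<partial>lborel) = (\<Sum>j<m. (\<integral>x. w j x * lst j \<partial>lborel))"
      by (intro Bochner_Integration.integral_sum integrable_mult_left w_int)
    also have "\<dots> = (\<Sum>j<m. lst j * a j)" using w_integral by (simp add: mult.commute)
    finally show ?thesis .
  qed
  also have "(\<integral>x. U x * Hs x \<partial>lborel) = (\<integral>x. kp (Hs x) * Hs x \<partial>LL)"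
    unfolding LL_to_lborel U_def by (simp add: mult.assoc)
  finally show ?thesis unfolding Acost_def .
qed

lemma costf_nonneg: "costf x \<ge> 0" unfolding costf_def using w_nonneg c_nonneg by (simp add: sum_nonneg)

lemma D_split: "D lst = Acost + Bf"
proof -
  have "(\<integral>x. fs (H lst x) \<partial>LL) = (\<integral>x. kp (Hs x) * Hs x - fp (kp (Hs x)) \<partial>LL)"
    unfolding Hs_def by (simp add: fs_alt mult.commute)
  also have "\<dots> = (\<integral>x. kp (Hs x) * Hs x \<partial>LL) - Bf"
    unfolding Bf_def by (rule Bochner_Integration.integral_diff[OF kpHs_Hs_int fpkp_int])
  finally show ?thesis unfolding D_def Acost_def by simp
qed

lemma Tp_\<rho>s: "Tp p \<rho>s \<nu> \<le> ennreal Acost"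
proof -
  have "Tp p \<rho>s \<nu> \<le> (\<integral>\<^sup>+z. ennreal (dist (fst z) (snd z) powr p) \<partial>\<gamma>s)"
    unfolding Tp_def by (rule INF_lower[OF \<gamma>s_plan])
  also have "\<dots> = (\<integral>\<^sup>+x. (\<Sum>j<m. ennreal (w j x) * ennreal (dist x (xs j) powr p)) \<partial>lborel)"
    using \<gamma>s_formula[of "\<lambda>z. ennreal (dist (fst z) (snd z) powr p)"] by simp
  also have "\<dots> = (\<integral>\<^sup>+x. ennreal (costf x) \<partial>lborel)"
    unfolding costf_def c_def using w_nonneg by (simp add: sum_ennreal ennreal_mult[symmetric])
  also have "\<dots> = ennreal (\<integral>x. costf x \<partial>lborel)"
    by (rule nn_integral_eq_integral[OF costf_int]) (simp add: costf_nonneg)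
  finally show ?thesis using costf_integral by simp
qed

lemma Ffun_\<rho>s: "Ffun f \<Omega> \<rho>s \<le> ennreal Bf"
proof -
  have "Ffun f \<Omega> \<rho>s \<le> (\<integral>\<^sup>+x\<in>\<Omega>. ennreal (f (U x)) \<partial>lborel)"
    unfolding Ffun_def by (rule INF_lower) (use U_nonneg in \<open>simp add: \<rho>s_def\<close>)
  also have "\<dots> = (\<integral>\<^sup>+x. ennreal (fp (kp (Hs x))) \<partial>LL)"
    unfolding LL_def by (subst nn_integral_restrict_space) (auto intro!: nn_integral_cong simp: U_def fp_def kp_nonneg indicator_def)
  also have "\<dots> = ennreal Bf"
    unfolding Bf_def by (rule nn_integral_eq_integral[OF fpkp_int]) (use fp_kpHs_bound in auto)
  finally show ?thesis .
qed

lemma Acost_nonneg: "Acost \<ge> 0"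
  using costf_integral costf_nonneg integral_nonneg_AE[of costf lborel] by auto

lemma Bf_nonneg: "Bf \<ge> 0"
  unfolding Bf_def using fp_kpHs_bound by (intro integral_nonneg_AE) auto

lemma frakF_\<rho>s: "frakF p f \<Omega> \<nu> \<rho>s \<le> ennreal (D lst)"
proof -
  have "frakF p f \<Omega> \<nu> \<rho>s \<le> ennreal Acost + ennreal Bf"
    unfolding frakF_def using Tp_\<rho>s Ffun_\<rho>s by (rule add_mono)
  also have "\<dots> = ennreal (D lst)" using D_split Acost_nonneg Bf_nonneg by (simp add: ennreal_plus)
  finally show ?thesis .
qed

lemma D_lst_nonneg: "D lst \<ge> 0" using D_split Acost_nonneg Bf_nonneg by simp

end

context main begin

interpretation LLf: finite_measure LL by (rule LL_finite)

lemma Ffun_\<mu>: "Ffun f \<Omega> \<mu> = (\<integral>\<^sup>+x\<in>\<Omega>. ennreal (f (u x)) \<partial>lborel)"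
proof -
  define S where "S = {v. v \<in> borel_measurable borel \<and> (\<forall>x. 0 \<le> v x) \<and> \<mu> = density lborel (\<lambda>x. ennreal (v x))}"
  have uS: "u \<in> S" unfolding S_def using u_meas u_nonneg \<mu>_def by auto
  have eq: "(\<integral>\<^sup>+x\<in>\<Omega>. ennreal (f (v x)) \<partial>lborel) = (\<integral>\<^sup>+x\<in>\<Omega>. ennreal (f (u x)) \<partial>lborel)" if v: "v \<in> S" for v
  proof -
    have vm: "v \<in> borel_measurable borel" "\<forall>x. 0 \<le> v x" "\<mu> = density lborel (\<lambda>x. ennreal (v x))"
      using v unfolding S_def by auto
    have "density lborel (\<lambda>x. ennreal (v x)) = density lborel (\<lambda>x. ennreal (u x))"
      using vm(3) \<mu>_def by simp
    then have "AE x in lborel. ennreal (v x) = ennreal (u x)"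
      by (intro sigma_finite_measure.density_unique[OF sigma_finite_lborel]) (use vm(1) in measurable)
    then have "AE x in lborel. v x = u x"
    proof eventually_elim
      case (elim x) then show ?case using vm(2) u_nonneg by (simp add: ennreal_inj)
    qed
    then show ?thesis by (intro nn_integral_cong_AE) (auto elim: eventually_mono)
  qed
  have "Ffun f \<Omega> \<mu> = (INF v\<in>S. \<integral>\<^sup>+x\<in>\<Omega>. ennreal (f (v x)) \<partial>lborel)" unfolding Ffun_def S_def ..
  also have "\<dots> = (\<integral>\<^sup>+x\<in>\<Omega>. ennreal (f (u x)) \<partial>lborel)"
  proof (rule antisym)
    show "(INF v\<in>S. \<integral>\<^sup>+x\<in>\<Omega>. ennreal (f (v x)) \<partial>lborel) \<le> (\<integral>\<^sup>+x\<in>\<Omega>. ennreal (f (u x)) \<partial>lborel)"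
      by (rule INF_lower[OF uS])
    show "(\<integral>\<^sup>+x\<in>\<Omega>. ennreal (f (u x)) \<partial>lborel) \<le> (INF v\<in>S. \<integral>\<^sup>+x\<in>\<Omega>. ennreal (f (v x)) \<partial>lborel)"
      by (rule INF_greatest) (simp add: eq)
  qed
  finally show ?thesis .
qed

lemma Ffun_\<mu>_LL: "Ffun f \<Omega> \<mu> = (\<integral>\<^sup>+x. ennreal (fp (u x)) \<partial>LL)"
  unfolding Ffun_\<mu> LL_def
  by (subst nn_integral_restrict_space) (auto intro!: nn_integral_cong simp: fp_def u_nonneg)

lemma frakF_\<mu>_le: "frakF p f \<Omega> \<nu> \<mu> \<le> ennreal (D lst)"
proof -
  have "frakF p f \<Omega> \<nu> \<mu> \<le> frakF p f \<Omega> \<nu> \<rho>s" using minimizer \<rho>s_in by blast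
  also have "\<dots> \<le> ennreal (D lst)" by (rule frakF_\<rho>s)
  finally show ?thesis .
qed

lemma Fu_fin: "(\<integral>\<^sup>+x. ennreal (fp (u x)) \<partial>LL) < \<infinity>"
proof -
  have "(\<integral>\<^sup>+x. ennreal (fp (u x)) \<partial>LL) \<le> frakF p f \<Omega> \<nu> \<mu>"
    unfolding frakF_def Ffun_\<mu>_LL by simp
  also have "\<dots> \<le> ennreal (D lst)" by (rule frakF_\<mu>_le)
  finally show ?thesis by (simp add: le_less_trans)
qed

lemma fpu_nonneg: "fp (u x) \<ge> 0" unfolding fp_def using f_nonneg by simp

lemma fpu_int: "integrable LL (\<lambda>x. fp (u x))"
proof -
  obtain r where r: "(\<integral>\<^sup>+x. ennreal (fp (u x)) \<partial>LL) = ennreal r"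
    using Fu_fin by (cases "(\<integral>\<^sup>+x. ennreal (fp (u x)) \<partial>LL)") auto
  show ?thesis
    by (rule integrableI_nn_integral_finite[OF LL_meas[OF fp_meas[OF u_meas]] _ r]) (use fpu_nonneg in auto)
qed

definition Fu :: real where "Fu = (\<integral>x. fp (u x) \<partial>LL)"

lemma Ffun_\<mu>_eq: "Ffun f \<Omega> \<mu> = ennreal Fu"
  unfolding Ffun_\<mu>_LL Fu_def by (rule nn_integral_eq_integral[OF fpu_int]) (simp add: fpu_nonneg)

lemma Hs_bound: "x \<in> \<Omega> \<Longrightarrow> \<bar>Hs x\<bar> \<le> \<bar>Lmax lst\<bar> + \<bar>C0\<bar>"
  using H_le[of lst x] H_low[of x lst] unfolding Hs_def by linarith

lemma u_int_LL: "integrable LL u"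
proof -
  have "integrable lborel (\<lambda>x. indicator \<Omega> x *\<^sub>R u x)"
    using u_integrable by (intro integrable_mult_indicator) auto
  then show ?thesis unfolding LL_def by (subst integrable_restrict_space) auto
qed

lemma Hsu_int: "integrable LL (\<lambda>x. Hs x * u x)"
proof (rule Bochner_Integration.integrable_bound)
  show "integrable LL (\<lambda>x. (\<bar>Lmax lst\<bar> + \<bar>C0\<bar>) * u x)" using u_int_LL by simp
  show "(\<lambda>x. Hs x * u x) \<in> borel_measurable LL" by (intro LL_meas) (use u_meas in measurable)
  show "AE x in LL. norm (Hs x * u x) \<le> norm ((\<bar>Lmax lst\<bar> + \<bar>C0\<bar>) * u x)"
  proof (rule AE_I2)
    fix x assume "x \<in> space LL"
    then have "\<bar>Hs x\<bar> \<le> \<bar>Lmax lst\<bar> + \<bar>C0\<bar>" using Hs_bound space_LL by auto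
    then show "norm (Hs x * u x) \<le> norm ((\<bar>Lmax lst\<bar> + \<bar>C0\<bar>) * u x)"
      using u_nonneg[rule_format, of x] by (simp add: abs_mult mult_right_mono)
  qed
qed

definition Wd :: real where "Wd = (\<Sum>i<m. lst i * a i) - (\<integral>x. Hs x * u x \<partial>LL)"

lemma plan_lb:
  assumes \<gamma>: "\<gamma> \<in> transport_plans \<mu> \<nu>"
    and fin: "(\<integral>\<^sup>+z. ennreal (dist (fst z) (snd z) powr p) \<partial>\<gamma>) = ennreal C"
    and C0: "C \<ge> 0"
  shows "Wd \<le> C"
proof -
  have \<gamma>p: "prob_space \<gamma>" and \<gamma>s: "sets \<gamma> = sets borel"
    and d1: "distr \<gamma> borel fst = \<mu>" and d2: "distr \<gamma> borel snd = \<nu>"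
    using \<gamma> unfolding transport_plans_def by auto
  interpret G: prob_space \<gamma> by (rule \<gamma>p)
  have sp: "space \<gamma> = UNIV" using sets_eq_imp_space_eq[OF \<gamma>s] by simp
  have mG: "h \<in> borel_measurable \<gamma>" if "h \<in> borel_measurable (borel :: ('a \<times> 'a) measure)" for h :: "_ \<Rightarrow> real"
    by (subst measurable_cong_sets[OF \<gamma>s refl]) (rule that)
  have fm: "fst \<in> \<gamma> \<rightarrow>\<^sub>M (borel :: 'a measure)"
    by (subst measurable_cong_sets[OF \<gamma>s refl]) (rule fst_meas)
  have sm: "snd \<in> \<gamma> \<rightarrow>\<^sub>M (borel :: 'a measure)"
    by (subst measurable_cong_sets[OF \<gamma>s refl]) (rule snd_meas)
  have ae1: "AE z in \<gamma>. fst z \<in> \<Omega>"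
  proof (rule AE_distrD[OF fm])
    have "AE x in \<mu>. x \<in> \<Omega>"
      using \<mu>_out by (subst AE_iff_measurable[of "- \<Omega>"]) (auto simp: \<mu>_def)
    then show "AE x in distr \<gamma> borel fst. x \<in> \<Omega>" unfolding d1 .
  qed
  have ae2: "AE z in \<gamma>. snd z \<in> X"
    by (rule AE_distrD[OF sm]) (unfold d2, rule \<nu>_AE_X)
  define gl where "gl z = (\<Sum>i<m. lst i * indicator {xs i} (snd z)) - indicator \<Omega> (fst z) * Hs (fst z)" for z :: "'a \<times> 'a"
  have gl_meas: "gl \<in> borel_measurable (borel :: ('a \<times> 'a) measure)" unfolding gl_def by measurable
  have cost_meas: "(\<lambda>z::'a \<times> 'a. dist (fst z) (snd z) powr p) \<in> borel_measurable borel" by measurable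
  have cost_int: "integrable \<gamma> (\<lambda>z. dist (fst z) (snd z) powr p)"
    by (rule integrableI_nn_integral_finite[OF mG[OF cost_meas] _ fin]) simp
  have gl_bound: "\<bar>gl z\<bar> \<le> (\<Sum>i<m. \<bar>lst i\<bar>) + (\<bar>Lmax lst\<bar> + \<bar>C0\<bar>)" for z
  proof -
    have "\<bar>\<Sum>i<m. lst i * indicator {xs i} (snd z)\<bar> \<le> (\<Sum>i<m. \<bar>lst i * indicator {xs i} (snd z)\<bar>)"
      by (rule sum_abs)
    also have "\<dots> \<le> (\<Sum>i<m. \<bar>lst i\<bar>)" by (intro sum_mono) (auto simp: indicator_def abs_mult)
    finally have a1: "\<bar>\<Sum>i<m. lst i * indicator {xs i} (snd z)\<bar> \<le> (\<Sum>i<m. \<bar>lst i\<bar>)" .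
    have a2: "\<bar>indicator \<Omega> (fst z) * Hs (fst z)\<bar> \<le> \<bar>Lmax lst\<bar> + \<bar>C0\<bar>"
      using Hs_bound[of "fst z"] by (auto simp: indicator_def)
    show ?thesis unfolding gl_def using a1 a2 by linarith
  qed
  have gl_int: "integrable \<gamma> gl"
    by (rule G.integrable_const_bound[where B="(\<Sum>i<m. \<bar>lst i\<bar>) + (\<bar>Lmax lst\<bar> + \<bar>C0\<bar>)"])
       (use gl_bound mG[OF gl_meas] in auto)
  have "(\<integral>z. gl z \<partial>\<gamma>) \<le> (\<integral>z. dist (fst z) (snd z) powr p \<partial>\<gamma>)"
  proof (rule integral_mono_AE[OF gl_int cost_int])
    show "AE z in \<gamma>. gl z \<le> dist (fst z) (snd z) powr p"
      using ae1 ae2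
    proof eventually_elim
      case (elim z)
      then obtain j where j: "j < m" "snd z = xs j" unfolding X_def by auto
      have "(\<Sum>i<m. lst i * indicator {xs i} (snd z)) = (\<Sum>i<m. if i = j then lst i else 0)"
        using j atoms_distinct by (intro sum.cong) (auto simp: indicator_def inj_on_def)
      also have "\<dots> = lst j" using j by simp
      finally have "gl z = lst j - Hs (fst z)" unfolding gl_def using elim by simp
      also have "\<dots> \<le> c j (fst z)" using H_ge[OF j(1), of lst "fst z"] unfolding Hs_def by simp
      finally show ?case unfolding c_def using j by simp
    qed
  qed
  also have "\<dots> = C"
  proof -
    have nn: "0 \<le> (\<integral>z. dist (fst z) (snd z) powr p \<partial>\<gamma>)" by (intro integral_nonneg_AE) auto
    have "ennreal (\<integral>z. dist (fst z) (snd z) powr p \<partial>\<gamma>) = ennreal C"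
      using nn_integral_eq_integral[OF cost_int] fin by simp
    then show ?thesis using nn C0 by simp
  qed
  finally have glC: "(\<integral>z. gl z \<partial>\<gamma>) \<le> C" .
  have i1: "(\<integral>z. indicator {xs i} (snd z) \<partial>\<gamma>) = a i" if "i < m" for i :: nat
  proof -
    have "(\<integral>z. indicator {xs i} (snd z) \<partial>\<gamma>) = (\<integral>y. (indicator {xs i} y :: real) \<partial>distr \<gamma> borel snd)"
      by (subst integral_distr[OF sm]) simp_all
    also have "\<dots> = measure \<nu> {xs i}" using d2 \<nu>_sets by simp
    also have "\<dots> = a i" using \<nu>_point[OF that] a_pos[OF that] by (simp add: measure_def)
    finally show ?thesis .
  qed
  have i2: "(\<integral>z. indicator \<Omega> (fst z) * Hs (fst z) \<partial>\<gamma>) = (\<integral>x. Hs x * u x \<partial>LL)"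
  proof -
    have "(\<integral>z. indicator \<Omega> (fst z) * Hs (fst z) \<partial>\<gamma>) = (\<integral>x. indicator \<Omega> x * Hs x \<partial>distr \<gamma> borel fst)"
      by (subst integral_distr[OF fm]) simp_all
    also have "\<dots> = (\<integral>x. u x *\<^sub>R (indicator \<Omega> x * Hs x) \<partial>lborel)"
      unfolding d1 \<mu>_def by (rule integral_density) (use u_nonneg in auto)
    also have "\<dots> = (\<integral>x. Hs x * u x \<partial>LL)" unfolding LL_to_lborel by (simp add: mult_ac)
    finally show ?thesis .
  qed
  have "(\<integral>z. gl z \<partial>\<gamma>) = (\<Sum>i<m. lst i * (\<integral>z. indicator {xs i} (snd z) \<partial>\<gamma>)) - (\<integral>z. indicator \<Omega> (fst z) * Hs (fst z) \<partial>\<gamma>)"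
  proof -
    have ind_int: "integrable \<gamma> (\<lambda>z. indicator {xs i} (snd z) :: real)" for i
      by (rule G.integrable_const_bound[where B=1]) (auto intro: mG)
    have H_int: "integrable \<gamma> (\<lambda>z. indicator \<Omega> (fst z) * Hs (fst z))"
      by (rule G.integrable_const_bound[where B="\<bar>Lmax lst\<bar> + \<bar>C0\<bar>"])
         (use Hs_bound in \<open>auto intro: mG simp: indicator_def\<close>)
    have "(\<integral>z. gl z \<partial>\<gamma>) = (\<integral>z. (\<Sum>i<m. lst i * indicator {xs i} (snd z)) \<partial>\<gamma>) - (\<integral>z. indicator \<Omega> (fst z) * Hs (fst z) \<partial>\<gamma>)"
      unfolding gl_def
      by (rule Bochner_Integration.integral_diff[OF Bochner_Integration.integrable_sum H_int])
         (intro integrable_mult_right ind_int)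
    also have "(\<integral>z. (\<Sum>i<m. lst i * indicator {xs i} (snd z)) \<partial>\<gamma>) = (\<Sum>i<m. lst i * (\<integral>z. indicator {xs i} (snd z) \<partial>\<gamma>))"
      by (subst Bochner_Integration.integral_sum) (auto intro: integrable_mult_right ind_int)
    finally show ?thesis .
  qed
  then have "(\<integral>z. gl z \<partial>\<gamma>) = Wd" unfolding Wd_def using i1 i2 by simp
  then show ?thesis using glC by simp
qed

end

context main begin

interpretation LLf: finite_measure LL by (rule LL_finite)

lemma Fu_nonneg: "Fu \<ge> 0" unfolding Fu_def using fpu_nonneg by (intro integral_nonneg_AE) auto

lemma key_ineq: "ennreal (Wd + Fu) \<le> frakF p f \<Omega> \<nu> \<mu>"
proof -
  have F: "frakF p f \<Omega> \<nu> \<mu> = Tp p \<mu> \<nu> + ennreal Fu" unfolding frakF_def Ffun_\<mu>_eq ..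
  show ?thesis
  proof (cases "Wd \<le> 0")
    case True
    have "ennreal (Wd + Fu) \<le> ennreal Fu" using True by (intro ennreal_leI) simp
    also have "\<dots> \<le> Tp p \<mu> \<nu> + ennreal Fu" by simp
    finally show ?thesis unfolding F .
  next
    case False
    have "ennreal Wd \<le> Tp p \<mu> \<nu>"
      unfolding Tp_def
    proof (rule INF_greatest)
      fix \<gamma> assume \<gamma>: "\<gamma> \<in> transport_plans \<mu> \<nu>"
      show "ennreal Wd \<le> (\<integral>\<^sup>+z. ennreal (dist (fst z) (snd z) powr p) \<partial>\<gamma>)"
      proof (cases "(\<integral>\<^sup>+z. ennreal (dist (fst z) (snd z) powr p) \<partial>\<gamma>) = \<top>")
        case True then show ?thesis by simp
      next
        case nt: False
        define C where "C = enn2real (\<integral>\<^sup>+z. ennreal (dist (fst z) (snd z) powr p) \<partial>\<gamma>)"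
        have eq: "(\<integral>\<^sup>+z. ennreal (dist (fst z) (snd z) powr p) \<partial>\<gamma>) = ennreal C"
          unfolding C_def using nt by (simp add: ennreal_enn2real_if)
        have "Wd \<le> C" by (rule plan_lb[OF \<gamma> eq]) (simp add: C_def)
        then show ?thesis unfolding eq by (intro ennreal_leI)
      qed
    qed
    then have "ennreal Wd + ennreal Fu \<le> Tp p \<mu> \<nu> + ennreal Fu" by (rule add_right_mono)
    moreover have "ennreal (Wd + Fu) = ennreal Wd + ennreal Fu"
      using False Fu_nonneg by (intro ennreal_plus) auto
    ultimately show ?thesis unfolding F by simp
  qed
qed

lemma WF_le: "Wd + Fu \<le> D lst"
proof -
  have "ennreal (Wd + Fu) \<le> ennreal (D lst)" using key_ineq frakF_\<mu>_le by (rule order_trans)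
  then show ?thesis using D_lst_nonneg by simp
qed

definition gap :: "'a \<Rightarrow> real" where "gap x = fs (Hs x) - (Hs x * u x - fp (u x))"

lemma gap_nonneg: "gap x \<ge> 0"
proof -
  have "Hs x * u x - f (u x) \<le> fs (Hs x)" using u_nonneg by (intro fenchel) auto
  then show ?thesis unfolding gap_def fp_def using u_nonneg by simp
qed

lemma gap_pos: "u x \<noteq> kp (Hs x) \<Longrightarrow> gap x > 0"
proof -
  assume ne: "u x \<noteq> kp (Hs x)"
  have "Hs x * u x - f (u x) < fs (Hs x)" using u_nonneg ne by (intro fenchel_strict) auto
  then show ?thesis unfolding gap_def fp_def using u_nonneg by simp
qed

lemma fsHs_int: "integrable LL (\<lambda>x. fs (Hs x))" unfolding Hs_def by (rule fsH_int)

lemma gap_int: "integrable LL gap"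
  unfolding gap_def
  by (intro Bochner_Integration.integrable_diff fsHs_int Hsu_int fpu_int)

lemma gap_integral: "(\<integral>x. gap x \<partial>LL) = Wd + Fu - D lst"
proof -
  have "(\<integral>x. gap x \<partial>LL) = (\<integral>x. fs (Hs x) \<partial>LL) - (\<integral>x. Hs x * u x - fp (u x) \<partial>LL)"
    unfolding gap_def by (rule Bochner_Integration.integral_diff[OF fsHs_int])
      (intro Bochner_Integration.integrable_diff Hsu_int fpu_int)
  also have "(\<integral>x. Hs x * u x - fp (u x) \<partial>LL) = (\<integral>x. Hs x * u x \<partial>LL) - Fu"
    unfolding Fu_def by (rule Bochner_Integration.integral_diff[OF Hsu_int fpu_int])
  finally show ?thesis unfolding Wd_def D_def Hs_def by simp
qed

lemma u_eq_LL: "AE x in LL. u x = kp (Hs x)"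
proof -
  have "(\<integral>x. gap x \<partial>LL) \<le> 0" using gap_integral WF_le by simp
  moreover have "(\<integral>x. gap x \<partial>LL) \<ge> 0" using gap_nonneg by (intro integral_nonneg_AE) auto
  ultimately have "(\<integral>x. gap x \<partial>LL) = 0" by simp
  then have "AE x in LL. gap x = 0"
    using integral_nonneg_eq_0_iff_AE[OF gap_int] gap_nonneg by simp
  then show ?thesis
  proof eventually_elim
    case (elim x) then show ?case using gap_pos[of x] by (cases "u x = kp (Hs x)") auto
  qed
qed

lemma u_eq: "AE x in lborel. x \<in> \<Omega> \<longrightarrow> u x = kp (Hs x)"
  using u_eq_LL unfolding LL_def by (subst (asm) AE_restrict_space_iff) auto

lemma kpHs_eq: "kp (Hs y) = k (Max (insert 0 ((\<lambda>i. lst i - dist y (xs i) powr p) ` {..<m})))"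
proof -
  have "Max (insert 0 ((\<lambda>i. lst i - dist y (xs i) powr p) ` {..<m})) = max 0 (Max ((\<lambda>i. lst i - dist y (xs i) powr p) ` {..<m}))"
    using m_pos by (intro Max_insert) auto
  then show ?thesis unfolding kp_def Hs_def H_def c_def by simp
qed

lemma pos_iff: "lst i - dist y (xs i) powr p > 0 \<longleftrightarrow> lst i > 0 \<and> y \<in> ball (xs i) (lst i powr (1 / p))"
proof -
  define d where "d = dist y (xs i)"
  define l where "l = lst i"
  have d0: "d \<ge> 0" unfolding d_def by simp
  have p0: "p > 0" using p by simp
  have ball: "y \<in> ball (xs i) (l powr (1 / p)) \<longleftrightarrow> d < l powr (1 / p)"
    unfolding d_def by (simp add: dist_commute)
  have "l - d powr p > 0 \<longleftrightarrow> l > 0 \<and> d < l powr (1 / p)"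
  proof
    assume h: "l - d powr p > 0"
    then have l0: "l > 0" using powr_ge_zero[of d p] by linarith
    have "d < l powr (1 / p)"
    proof (cases "d = 0")
      case True then show ?thesis using l0 by simp
    next
      case False
      then have "d > 0" using d0 by simp
      have "(d powr p) powr (1 / p) < l powr (1 / p)" using h p0 by (intro powr_less_mono2) auto
      moreover have "(d powr p) powr (1 / p) = d" using p0 \<open>d > 0\<close> by (simp add: powr_powr)
      ultimately show ?thesis by simp
    qed
    then show "l > 0 \<and> d < l powr (1 / p)" using l0 by simp
  next
    assume h: "l > 0 \<and> d < l powr (1 / p)"
    have "d powr p < (l powr (1 / p)) powr p" using h d0 p0 by (intro powr_less_mono2) auto
    also have "\<dots> = l" using p0 h by (simp add: powr_powr)
    finally show "l - d powr p > 0" by simp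
  qed
  then show ?thesis unfolding ball d_def l_def by (simp add: dist_commute)
qed

lemma final:
  "\<exists>c :: nat \<Rightarrow> real.
     (AE y in lborel. y \<in> \<Omega> \<longrightarrow>
        u y = k (Max (insert 0 ((\<lambda>i. c i - dist y (xs i) powr p) ` {..<m})))) \<and>
     (AE y in lborel. (u y > 0 \<longleftrightarrow>
        y \<in> \<Omega> \<and> (\<exists>i<m. c i > 0 \<and> y \<in> ball (xs i) (c i powr (1 / p)))))"
proof (intro exI conjI)
  show "AE y in lborel. y \<in> \<Omega> \<longrightarrow> u y = k (Max (insert 0 ((\<lambda>i. lst i - dist y (xs i) powr p) ` {..<m})))"
    using u_eq by eventually_elim (simp add: kpHs_eq)
  show "AE y in lborel. (u y > 0 \<longleftrightarrow> y \<in> \<Omega> \<and> (\<exists>i<m. lst i > 0 \<and> y \<in> ball (xs i) (lst i powr (1 / p))))"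
    using u_eq u_out
  proof eventually_elim
    case (elim y)
    show ?case
    proof (cases "y \<in> \<Omega>")
      case True
      then have uy: "u y = kp (Hs y)" using elim by simp
      have "u y > 0 \<longleftrightarrow> Hs y > 0"
        unfolding uy using kp_pos[of "Hs y"] kp_zero[of "Hs y"] by (cases "Hs y > 0") auto
      also have "\<dots> \<longleftrightarrow> (\<exists>i<m. lst i - c i y > 0)"
        unfolding Hs_def H_def using m_pos by (subst Max_gr_iff) auto
      also have "\<dots> \<longleftrightarrow> (\<exists>i<m. lst i > 0 \<and> y \<in> ball (xs i) (lst i powr (1 / p)))"
        unfolding c_def using pos_iff by simp
      finally show ?thesis using True by simp
    next
      case False
      then show ?thesis using elim by simp
    qed
  qed
qed

end

theorem theorem4p2:
  fixes \<Omega> :: "'a::euclidean_space set"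
    and p :: real and f f' k :: "real \<Rightarrow> real"
    and m :: nat and a :: "nat \<Rightarrow> real" and xs :: "nat \<Rightarrow> 'a"
    and \<nu> \<mu> :: "'a measure" and u :: "'a \<Rightarrow> real"
  assumes dom: "bounded_domain \<Omega>"
    and p: "p \<ge> 1"
    and f_nonneg: "\<forall>t\<ge>0. f t \<ge> 0"
    and f_strict: "strictly_convex_on {0..} f"
    and f_deriv: "\<forall>t\<ge>0. (f has_real_derivative f' t) (at t within {0..})"
    and f'_cont: "continuous_on {0..} f'"
    and f0: "f 0 = 0" and f'0: "f' 0 = 0"
    and f_superlin: "filterlim (\<lambda>t. f t / t) at_top at_top"
    and k: "\<forall>s\<ge>0. k s \<ge> 0 \<and> f' (k s) = s"
    and atoms: "\<forall>i<m. xs i \<in> \<Omega> \<and> a i > 0"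
    and atoms_distinct: "inj_on xs {..<m}"
    and a_sum: "(\<Sum>i<m. a i) = 1"
    and \<nu>_sets: "sets \<nu> = sets borel"
    and \<nu>_def: "\<forall>A\<in>sets borel. emeasure \<nu> A = (\<Sum>i<m. ennreal (a i) * indicator A (xs i))"
    and u_meas: "u \<in> borel_measurable borel"
    and u_nonneg: "\<forall>x. 0 \<le> u x"
    and \<mu>_def: "\<mu> = density lborel (\<lambda>x. ennreal (u x))"
    and \<mu>_in: "\<mu> \<in> prob_on \<Omega>"
    and minimizer: "\<forall>\<rho>\<in>prob_on \<Omega>. frakF p f \<Omega> \<nu> \<mu> \<le> frakF p f \<Omega> \<nu> \<rho>"
  shows "\<exists>c :: nat \<Rightarrow> real.
           (AE y in lborel. y \<in> \<Omega> \<longrightarrow>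
              u y = k (Max (insert 0 ((\<lambda>i. c i - dist y (xs i) powr p) ` {..<m})))) \<and>
           (AE y in lborel. (u y > 0 \<longleftrightarrow>
              y \<in> \<Omega> \<and> (\<exists>i<m. c i > 0 \<and> y \<in> ball (xs i) (c i powr (1 / p)))))"
proof -
  interpret main f f' k \<Omega> p m a xs \<nu> \<mu> u
    by (intro main.intro fk.intro main_axioms.intro; fact)
  show ?thesis by (rule final)
qed

end
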